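(* Let $n\ge2$, $m\ge2$, $0<r<n$ be integers, $C>0$, $T$ a positive integer with $\frac{1}{2nrCT^2}<1$ and $\sqrt{2\log(2nrCT^3(T+1))}\ge C$. Suppose $\mathbf{E}\in[0,C]^n$ is unknown to player 1, and the reward vectors $\mathbf{W}[1],\dots,\mathbf{W}[T]\in\mathbb{R}^n$ are i.i.d. with $W_k[t]=E_k+\eta_k[t]$, where each $\eta_k[t]$ is zero-mean and 1-sub-Gaussian (components within a time slot may be dependent). Set $\delta=\frac{1}{2nrCT^2}$, $L=\log\frac{T(T+1)}{\delta}=\log(2nrCT^3(T+1))$, $D=C+2\sqrt{2L}$, $\beta=\frac{1}{D\sqrt{T}}$. Player 1 runs the following UCB procedure: $\mathbf{p}[1]=(r/n,\dots,r/n)$; for $t=1,\dots,T$: with $n_k[t]=\sum_{\tau<t}\alpha_k[\tau]$, $\bar E_k[t]=\frac{1}{\max(1,n_k[t])}\sum_{\tau<t}\alpha_k[\tau]W_k[\tau]$, $\tilde E_k[t]=\bar E_k[t]+\sqrt{\frac{2L}{\max(1,n_k[t])}}$ and $f_t(\mathbf{p},\mathbf{x})=\sum_{k}\frac{\tilde E_k[t]p_k}{1+x_k}$, choose $\mathbf{x}[t]\in\arg\min_{\mathbf{x}\in\mathcal{J}_{m-1}}f_t(\mathbf{p}[t],\mathbf{x})$; draw a random action $\alpha[t]\in\mathcal{J}_1$ with $\mathbb{P}(\alpha_k[t]=1\mid\mathcal{H}[t])=p_k[t]$ for all $k$, and observe $W_k[t]$ for exactly those $k$ with $\alpha_k[t]=1$;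 set $\mathbf{p}[t+1]=\Pi_{\mathcal{I}}\big(\mathbf{p}[t]+\beta\nabla_{\mathbf{p}}f_t(\mathbf{p}[t],\mathbf{x}[t])\big)$ with $(\nabla_{\mathbf{p}}f_t(\mathbf{p},\mathbf{x}))_k=\tilde E_k[t]/(1+x_k)$. Then the worst-case regret satisfies $$R(T):=\sum_{t=1}^T\Big(f^{\mathrm{maximin}}-\mathbb{E}\{f^{\mathrm{worst}}(\mathbf{p}[t])\}\Big)\le nD\sqrt{T}+4n\sqrt{2rT\log(2nrCT^3(T+1))}+1.$$
   Context: $\mathcal{J}_q=\{\mathbf{x}\in\{0,\dots,q\}^n:\sum_jx_j=qr\}$; $\mathcal{I}=\{\mathbf{p}\in[0,1]^n:\sum_kp_k=r\}$; $\Pi_{\mathcal{I}}$ is Euclidean projection onto $\mathcal{I}$; $f(\mathbf{p},\mathbf{x})=\sum_k\frac{E_kp_k}{1+x_k}$; $f^{\mathrm{worst}}(\mathbf{p})=\min_{\mathbf{x}\in\mathcal{J}_{m-1}}f(\mathbf{p},\mathbf{x})$; $f^{\mathrm{maximin}}=\max_{\mathbf{p}\in\mathcal{I}}f^{\mathrm{worst}}(\mathbf{p})$. $\mathcal{H}[t]$ is the history of player 1 before slot $t$: its past actions $\alpha[\tau]$ and observed rewards $\{W_k[\tau]:\alpha_k[\tau]=1\}$, $\tau<t$; the action $\alpha[t]$ is drawn using only $\mathcal{H}[t]$ and independent randomness, and $\mathbf{W}[t]$ is independent of $\mathcal{H}[t]$ and $\alpha[t]$. The expectation is over rewards and player 1's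 randomization; $\log$ is the natural logarithm. *)

theory Defs
  imports "HOL-Probability.Probability"
begin

text \<open>Vectors in R^n are modelled as real^'n with n = CARD('n).\<close>

definition Jset :: "nat \<Rightarrow> nat \<Rightarrow> (real^'n) set" where
  "Jset q r = {x. (\<forall>k. \<exists>j::nat. j \<le> q \<and> x $ k = real j) \<and> (\<Sum>k\<in>UNIV. x $ k) = real q * real r}"

definition Iset :: "nat \<Rightarrow> (real^'n) set" where
  "Iset r = {p. (\<forall>k. 0 \<le> p $ k \<and> p $ k \<le> 1) \<and> (\<Sum>k\<in>UNIV. p $ k) = real r}"

definition projI :: "nat \<Rightarrow> real^'n \<Rightarrow> real^'n" where
  "projI r v = closest_point (Iset r) v"

definition fval :: "real^'n \<Rightarrow> real^'n \<Rightarrow> real^'n \<Rightarrow> real" where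
  "fval E p x = (\<Sum>k\<in>UNIV. E $ k * p $ k / (1 + x $ k))"

definition fworst :: "nat \<Rightarrow> nat \<Rightarrow> real^'n \<Rightarrow> real^'n \<Rightarrow> real" where
  "fworst m r E p = Min ((\<lambda>x. fval E p x) ` Jset (m - 1) r)"

definition fmaximin :: "nat \<Rightarrow> nat \<Rightarrow> real^'n \<Rightarrow> real" where
  "fmaximin m r E = (SUP p\<in>Iset r. fworst m r E p)"

text \<open>Observed rewards of slot tau (unobserved components masked by 0).\<close>
definition obs :: "(nat \<Rightarrow> 'a \<Rightarrow> real^'n) \<Rightarrow> (nat \<Rightarrow> 'a \<Rightarrow> real^'n) \<Rightarrow> nat \<Rightarrow> 'a \<Rightarrow> real^'n" where
  "obs \<alpha> W \<tau> \<omega> = (\<chi> k. if \<alpha> \<tau> \<omega> $ k = 1 then W \<tau> \<omega> $ k else 0)"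

text \<open>Generators of the sigma-algebra of the history H[t] (slots 1..t-1).\<close>
definition Hgen :: "'a measure \<Rightarrow> (nat \<Rightarrow> 'a \<Rightarrow> real^'n) \<Rightarrow> (nat \<Rightarrow> 'a \<Rightarrow> real^'n) \<Rightarrow> nat \<Rightarrow> 'a set set" where
  "Hgen M \<alpha> W t = (\<Union>\<tau>\<in>{1..<t}. {\<alpha> \<tau> -` B \<inter> space M | B. B \<in> sets borel}
                              \<union> {obs \<alpha> W \<tau> -` B \<inter> space M | B. B \<in> sets borel})"

definition Hsig :: "'a measure \<Rightarrow> (nat \<Rightarrow> 'a \<Rightarrow> real^'n) \<Rightarrow> (nat \<Rightarrow> 'a \<Rightarrow> real^'n) \<Rightarrow> nat \<Rightarrow> 'a measure" where
  "Hsig M \<alpha> W t = sigma (space M) (Hgen M \<alpha> W t)"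

definition HAsig :: "'a measure \<Rightarrow> (nat \<Rightarrow> 'a \<Rightarrow> real^'n) \<Rightarrow> (nat \<Rightarrow> 'a \<Rightarrow> real^'n) \<Rightarrow> nat \<Rightarrow> 'a set set" where
  "HAsig M \<alpha> W t = sigma_sets (space M) (Hgen M \<alpha> W t \<union> {\<alpha> t -` B \<inter> space M | B. B \<in> sets borel})"

definition ncount :: "(nat \<Rightarrow> 'a \<Rightarrow> real^'n) \<Rightarrow> nat \<Rightarrow> 'a \<Rightarrow> 'n \<Rightarrow> real" where
  "ncount \<alpha> t \<omega> k = (\<Sum>\<tau>\<in>{1..<t}. \<alpha> \<tau> \<omega> $ k)"

definition Ebar :: "(nat \<Rightarrow> 'a \<Rightarrow> real^'n) \<Rightarrow> (nat \<Rightarrow> 'a \<Rightarrow> real^'n) \<Rightarrow> nat \<Rightarrow> 'a \<Rightarrow> real^'n" where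
  "Ebar \<alpha> W t \<omega> = (\<chi> k. (\<Sum>\<tau>\<in>{1..<t}. \<alpha> \<tau> \<omega> $ k * W \<tau> \<omega> $ k) / max 1 (ncount \<alpha> t \<omega> k))"

definition Etil :: "real \<Rightarrow> (nat \<Rightarrow> 'a \<Rightarrow> real^'n) \<Rightarrow> (nat \<Rightarrow> 'a \<Rightarrow> real^'n) \<Rightarrow> nat \<Rightarrow> 'a \<Rightarrow> real^'n" where
  "Etil L \<alpha> W t \<omega> = (\<chi> k. Ebar \<alpha> W t \<omega> $ k + sqrt (2 * L / max 1 (ncount \<alpha> t \<omega> k)))"

text \<open>ucb_q s = p[s+1]; x t \<omega> is the chosen minimiser x[t].\<close>
primrec ucb_q :: "nat \<Rightarrow> real \<Rightarrow> real \<Rightarrow> (nat \<Rightarrow> 'a \<Rightarrow> real^'n) \<Rightarrow> (nat \<Rightarrow> 'a \<Rightarrow> real^'n)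
                  \<Rightarrow> (nat \<Rightarrow> 'a \<Rightarrow> real^'n) \<Rightarrow> nat \<Rightarrow> 'a \<Rightarrow> real^'n" where
  "ucb_q r L \<beta> x \<alpha> W 0 \<omega> = (\<chi> k. real r / real CARD('n))"
| "ucb_q r L \<beta> x \<alpha> W (Suc s) \<omega> =
     projI r (ucb_q r L \<beta> x \<alpha> W s \<omega>
              + \<beta> *\<^sub>R (\<chi> k. Etil L \<alpha> W (Suc s) \<omega> $ k / (1 + x (Suc s) \<omega> $ k)))"

definition ucb_p :: "nat \<Rightarrow> real \<Rightarrow> real \<Rightarrow> (nat \<Rightarrow> 'a \<Rightarrow> real^'n) \<Rightarrow> (nat \<Rightarrow> 'a \<Rightarrow> real^'n)
                  \<Rightarrow> (nat \<Rightarrow> 'a \<Rightarrow> real^'n) \<Rightarrow> nat \<Rightarrow> 'a \<Rightarrow> real^'n" where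
  "ucb_p r L \<beta> x \<alpha> W t = ucb_q r L \<beta> x \<alpha> W (t - 1)"

end

theory Submission
  imports Defs
begin

lemma Iset_closed: "closed (Iset r :: (real^'n) set)"
  unfolding Iset_def
  by (intro closed_Collect_conj closed_Collect_all closed_Collect_le closed_Collect_eq continuous_intros)

lemma Iset_convex: "convex (Iset r :: (real^'n) set)"
proof (rule convexI)
  fix p q :: "real^'n" and u v :: real
  assume p: "p \<in> Iset r" and q: "q \<in> Iset r" and u: "0 \<le> u" and v: "0 \<le> v" and uv: "u + v = 1"
  have c: "0 \<le> u * p $ k + v * q $ k \<and> u * p $ k + v * q $ k \<le> 1" for k
  proof -
    have "0 \<le> p $ k" "p $ k \<le> 1" "0 \<le> q $ k" "q $ k \<le> 1" using p q by (auto simp: Iset_def)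
    moreover have "u * p $ k \<le> u" "v * q $ k \<le> v" using u v \<open>p $ k \<le> 1\<close> \<open>q $ k \<le> 1\<close>
      by (simp_all add: mult_left_le)
    ultimately show ?thesis using u v uv by (auto intro!: add_nonneg_nonneg mult_nonneg_nonneg)
  qed
  have "(\<Sum>k\<in>UNIV. u * p $ k + v * q $ k) = u * (\<Sum>k\<in>UNIV. p $ k) + v * (\<Sum>k\<in>UNIV. q $ k)"
    by (simp add: sum.distrib sum_distrib_left)
  also have "\<dots> = (u + v) * real r" using p q by (auto simp: Iset_def algebra_simps)
  also have "\<dots> = real r" using uv by simp
  finally show "u *\<^sub>R p + v *\<^sub>R q \<in> Iset r" using c by (auto simp: Iset_def)
qed

lemma uniform_Iset:
  assumes "r \<le> CARD('n)"
  shows "((\<chi> k. real r / real CARD('n)) :: real^'n) \<in> Iset r"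
  using assms by (auto simp: Iset_def divide_le_eq_1)

lemma Iset_nonempty: "r \<le> CARD('n) \<Longrightarrow> Iset r \<noteq> ({} :: (real^'n) set)"
  using uniform_Iset by blast

lemma Jset_finite: "finite (Jset q r :: (real^'n) set)"
proof -
  have "Jset q r \<subseteq> ((\<lambda>f. vec_lambda f) ` (UNIV \<rightarrow>\<^sub>E (real ` {0..q})) :: (real^'n) set)"
  proof
    fix x :: "real^'n" assume x: "x \<in> Jset q r"
    have "(\<lambda>k. x $ k) \<in> UNIV \<rightarrow>\<^sub>E real ` {0..q}"
    proof (intro PiE_I)
      fix k obtain j where "j \<le> q" "x $ k = real j" using x by (auto simp: Jset_def)
      then show "x $ k \<in> real ` {0..q}" by auto
    qed auto
    then show "x \<in> ((\<lambda>f. vec_lambda f) ` (UNIV \<rightarrow>\<^sub>E (real ` {0..q})) :: (real^'n) set)"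
      by (metis image_eqI vec_lambda_eta)
  qed
  moreover have "finite ((\<lambda>f. vec_lambda f) ` (UNIV \<rightarrow>\<^sub>E (real ` {0..q})) :: (real^'n) set)"
    by (intro finite_imageI finite_PiE) auto
  ultimately show ?thesis by (rule finite_subset)
qed

lemma Jset_nonneg: "x \<in> Jset q r \<Longrightarrow> 0 \<le> x $ k"
proof -
  assume "x \<in> Jset q r"
  then obtain j :: nat where "x $ k = real j" by (auto simp: Jset_def)
  then show ?thesis by simp
qed

lemma Jset1_01: "x \<in> Jset 1 r \<Longrightarrow> x $ k = 0 \<or> x $ k = 1"
proof -
  assume "x \<in> Jset 1 r"
  then obtain j :: nat where "j \<le> 1" "x $ k = real j" by (auto simp: Jset_def)
  then show ?thesis by (cases j) auto
qed

lemma Jset1_sum: "x \<in> Jset 1 r \<Longrightarrow> (\<Sum>k\<in>UNIV. x $ k) = real r"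
  by (auto simp: Jset_def)

lemma le_mult_1plus: "0 \<le> (a::real) \<Longrightarrow> 0 \<le> y \<Longrightarrow> a \<le> a * (1 + y)"
  by (simp add: algebra_simps)

lemma fval_diff:
  "fval e q x - fval e p x = ((\<chi> k. e $ k / (1 + x $ k)) :: real^'n) \<bullet> (q - p)"
  unfolding fval_def inner_vec_def
  by (simp add: sum_subtractf[symmetric] algebra_simps diff_divide_distrib)

lemma fval_mono_E:
  fixes E e q x :: "real^'n"
  assumes "\<And>k. E $ k \<le> e $ k" "\<And>k. 0 \<le> q $ k" "\<And>k. 0 \<le> x $ k"
  shows "fval E q x \<le> fval e q x"
  unfolding fval_def
proof (rule sum_mono)
  fix k
  have "E $ k * q $ k \<le> e $ k * q $ k" using assms by (simp add: mult_right_mono)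
  moreover have "0 < 1 + x $ k" using assms(3)[of k] by simp
  ultimately show "E $ k * q $ k / (1 + x $ k) \<le> e $ k * q $ k / (1 + x $ k)"
    by (simp add: divide_right_mono)
qed

lemma fval_gap:
  fixes E e p x c :: "real^'n"
  assumes "\<And>k. E $ k \<le> e $ k" "\<And>k. e $ k - E $ k \<le> c $ k" "\<And>k. 0 \<le> p $ k" "\<And>k. 0 \<le> x $ k"
  shows "fval e p x - fval E p x \<le> (\<Sum>k\<in>UNIV. c $ k * p $ k)"
  unfolding fval_def sum_subtractf[symmetric]
proof (rule sum_mono)
  fix k
  have x0: "1 \<le> 1 + x $ k" using assms(4)[of k] by simp
  have "e $ k * p $ k / (1 + x $ k) - E $ k * p $ k / (1 + x $ k) = (e $ k - E $ k) * p $ k / (1 + x $ k)"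
    by (simp add: algebra_simps diff_divide_distrib)
  also have "\<dots> \<le> (e $ k - E $ k) * p $ k"
    using x0 assms(1,3,4)[of k] by (simp add: divide_le_eq le_mult_1plus)
  also have "\<dots> \<le> c $ k * p $ k" using assms(2,3)[of k] by (simp add: mult_right_mono)
  finally show "e $ k * p $ k / (1 + x $ k) - E $ k * p $ k / (1 + x $ k) \<le> c $ k * p $ k" .
qed

lemma fworst_le:
  assumes "y \<in> Jset (m - 1) r"
  shows "fworst m r E p \<le> fval E p y"
  unfolding fworst_def using assms Jset_finite by (intro Min_le) auto

lemma fworst_attained:
  assumes "Jset (m - 1) r \<noteq> ({} :: (real^'n) set)"
  shows "\<exists>y\<in>Jset (m - 1) r. fworst m r E (p :: real^'n) = fval E p y"
proof -
  have "fworst m r E p \<in> (\<lambda>x. fval E p x) ` Jset (m - 1) r"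
    unfolding fworst_def using assms Jset_finite by (intro Min_in) auto
  then show ?thesis by auto
qed

lemma fval_nonneg:
  fixes E p y :: "real^'n"
  assumes "\<And>k. 0 \<le> E $ k" "\<And>k. 0 \<le> p $ k" "\<And>k. 0 \<le> y $ k"
  shows "0 \<le> fval E p y"
  unfolding fval_def using assms by (intro sum_nonneg divide_nonneg_nonneg mult_nonneg_nonneg) (auto intro: add_nonneg_nonneg)

lemma fval_le:
  fixes E p y :: "real^'n"
  assumes "\<And>k. 0 \<le> E $ k \<and> E $ k \<le> C" "p \<in> Iset r" "\<And>k. 0 \<le> y $ k"
  shows "fval E p y \<le> C * real r"
proof -
  have "fval E p y \<le> (\<Sum>k\<in>UNIV. C * p $ k)"
    unfolding fval_def
  proof (rule sum_mono)
    fix k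
    have p: "0 \<le> p $ k" using assms(2) by (auto simp: Iset_def)
    have "E $ k * p $ k / (1 + y $ k) \<le> E $ k * p $ k"
      using assms(1,3)[of k] p by (simp add: divide_le_eq le_mult_1plus)
    also have "\<dots> \<le> C * p $ k" using assms(1)[of k] p by (simp add: mult_right_mono)
    finally show "E $ k * p $ k / (1 + y $ k) \<le> C * p $ k" .
  qed
  also have "\<dots> = C * real r" using assms(2) by (simp add: Iset_def sum_distrib_left[symmetric])
  finally show ?thesis .
qed

lemma projI_nonexp:
  fixes q y :: "real^'n"
  assumes "q \<in> Iset r"
  shows "norm (projI r y - q) \<le> norm (y - q)"
proof -
  have ne: "Iset r \<noteq> ({} :: (real^'n) set)" using assms by auto
  have "dist (closest_point (Iset r) y) (closest_point (Iset r) q) \<le> dist y q"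
    by (rule closest_point_lipschitz[OF Iset_convex Iset_closed ne])
  then show ?thesis using closest_point_self[OF assms]
    by (simp add: projI_def dist_norm)
qed

lemma projI_in: "Iset r \<noteq> ({} :: (real^'n) set) \<Longrightarrow> projI r (y :: real^'n) \<in> Iset r"
  unfolding projI_def by (rule closest_point_in_set[OF Iset_closed])

lemma oga_step:
  fixes P q g :: "real^'n"
  assumes q: "q \<in> Iset r"
  shows "2 * \<beta> * (g \<bullet> (q - P)) \<le> (norm (P - q))\<^sup>2 - (norm (projI r (P + \<beta> *\<^sub>R g) - q))\<^sup>2 + \<beta>\<^sup>2 * (norm g)\<^sup>2"
proof -
  have "(norm (projI r (P + \<beta> *\<^sub>R g) - q))\<^sup>2 \<le> (norm (P + \<beta> *\<^sub>R g - q))\<^sup>2"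
    by (rule power_mono[OF projI_nonexp[OF q]]) simp
  also have "(norm (P + \<beta> *\<^sub>R g - q))\<^sup>2 = (norm (P - q))\<^sup>2 + 2 * \<beta> * (g \<bullet> (P - q)) + \<beta>\<^sup>2 * (norm g)\<^sup>2"
    unfolding power2_norm_eq_inner
    by (simp add: inner_add_left inner_add_right inner_diff_left inner_diff_right inner_commute power2_eq_square algebra_simps)
  finally have "(norm (projI r (P + \<beta> *\<^sub>R g) - q))\<^sup>2 \<le> (norm (P - q))\<^sup>2 + 2 * \<beta> * (g \<bullet> (P - q)) + \<beta>\<^sup>2 * (norm g)\<^sup>2" .
  moreover have "g \<bullet> (q - P) = - (g \<bullet> (P - q))" by (simp add: inner_diff_right)
  ultimately show ?thesis by simp
qed

lemma oga_sum:
  fixes P G :: "nat \<Rightarrow> real^'n"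
  assumes rec: "\<And>s. s < N \<Longrightarrow> P (Suc s) = projI r (P s + \<beta> *\<^sub>R G (Suc s))"
    and q: "q \<in> Iset r"
  shows "2 * \<beta> * (\<Sum>t=1..N. G t \<bullet> (q - P (t - 1)))
         \<le> (norm (P 0 - q))\<^sup>2 - (norm (P N - q))\<^sup>2 + \<beta>\<^sup>2 * (\<Sum>t=1..N. (norm (G t))\<^sup>2)"
  using rec
proof (induction N)
  case 0
  then show ?case by simp
next
  case (Suc N)
  have IH: "2 * \<beta> * (\<Sum>t=1..N. G t \<bullet> (q - P (t - 1)))
         \<le> (norm (P 0 - q))\<^sup>2 - (norm (P N - q))\<^sup>2 + \<beta>\<^sup>2 * (\<Sum>t=1..N. (norm (G t))\<^sup>2)"
    using Suc by auto
  have st: "2 * \<beta> * (G (Suc N) \<bullet> (q - P N)) \<le> (norm (P N - q))\<^sup>2 - (norm (P (Suc N) - q))\<^sup>2 + \<beta>\<^sup>2 * (norm (G (Suc N)))\<^sup>2"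
    using oga_step[OF q, of \<beta> "G (Suc N)" "P N"] Suc.prems[of N] by simp
  show ?case using IH st by (simp add: distrib_left algebra_simps)
qed

definition cfun :: "real \<Rightarrow> real \<Rightarrow> real" where
  "cfun K v = (if v = 0 then K else 2 * K / sqrt v)"

definition hh :: "real \<Rightarrow> real" where
  "hh v = (if v = 0 then 0 else 1 + 4 * sqrt (v - 1))"

lemma step_ineq:
  assumes "1 \<le> (j::real)"
  shows "1 / sqrt j \<le> 2 * (sqrt j - sqrt (j - 1))"
proof -
  define s where "s = sqrt j"
  define u where "u = sqrt (j - 1)"
  have s0: "0 < s" using assms by (simp add: s_def)
  have ss: "s * s = j" using assms by (simp add: s_def)
  have uu: "u * u = j - 1" using assms by (simp add: u_def)
  have "1 \<le> 2 * s * (s - u)"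
  proof -
    have "2 * s * (s - u) = (s - u) * (s - u) + 1" using ss uu by (simp add: algebra_simps)
    then show ?thesis by (simp add: add_increasing)
  qed
  then have "1 / s \<le> 2 * (s - u)" using s0 by (simp add: divide_le_eq mult.commute mult.left_commute)
  then show ?thesis by (simp add: s_def u_def)
qed

lemma count_sum:
  fixes a :: "nat \<Rightarrow> real" and K :: real
  assumes a01: "\<And>t. t \<in> {1..N} \<Longrightarrow> a t = 0 \<or> a t = 1" and K: "0 \<le> K"
  shows "(\<Sum>t=1..N. a t * cfun K (\<Sum>\<tau>\<in>{1..<t}. a \<tau>)) \<le> K * hh (\<Sum>\<tau>\<in>{1..<N+1}. a \<tau>)
         \<and> (\<exists>j::nat. (\<Sum>\<tau>\<in>{1..<N+1}. a \<tau>) = real j)"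
  using a01
proof (induction N)
  case 0
  then show ?case by (simp add: hh_def)
next
  case (Suc N)
  define v where "v = (\<Sum>\<tau>\<in>{1..<N+1}. a \<tau>)"
  have IH: "(\<Sum>t=1..N. a t * cfun K (\<Sum>\<tau>\<in>{1..<t}. a \<tau>)) \<le> K * hh v" "\<exists>j::nat. v = real j"
    using Suc by (auto simp: v_def)
  then obtain j :: nat where j: "v = real j" by auto
  have vs: "(\<Sum>\<tau>\<in>{1..<Suc N+1}. a \<tau>) = v + a (Suc N)"
    by (simp add: v_def)
  have aS: "a (Suc N) = 0 \<or> a (Suc N) = 1" using Suc.prems by auto
  have sumS: "(\<Sum>t=1..Suc N. a t * cfun K (\<Sum>\<tau>\<in>{1..<t}. a \<tau>))
      = (\<Sum>t=1..N. a t * cfun K (\<Sum>\<tau>\<in>{1..<t}. a \<tau>)) + a (Suc N) * cfun K v"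
    by (simp add: v_def)
  show ?case
  proof (cases "a (Suc N) = 0")
    case True
    have e1: "(\<Sum>t=1..Suc N. a t * cfun K (\<Sum>\<tau>\<in>{1..<t}. a \<tau>)) = (\<Sum>t=1..N. a t * cfun K (\<Sum>\<tau>\<in>{1..<t}. a \<tau>))"
      using sumS True by simp
    have e2: "(\<Sum>\<tau>\<in>{1..<Suc N+1}. a \<tau>) = v" using vs True by simp
    show ?thesis unfolding e1 e2 using IH by blast
  next
    case False
    then have a1: "a (Suc N) = 1" using aS by auto
    have "K * hh v + cfun K v \<le> K * hh (v + 1)"
    proof (cases "j = 0")
      case True
      then show ?thesis using j by (simp add: hh_def cfun_def)
    next
      case False
      then have v1: "1 \<le> v" using j by simp
      have "1 / sqrt v \<le> 2 * (sqrt v - sqrt (v - 1))" by (rule step_ineq[OF v1])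
      then have "K * (1 / sqrt v) \<le> K * (2 * (sqrt v - sqrt (v - 1)))" using K by (rule mult_left_mono)
      then have h1: "K / sqrt v \<le> 2 * K * sqrt v - 2 * K * sqrt (v - 1)" by (simp add: algebra_simps)
      have h2: "2 * K / sqrt v = 2 * (K / sqrt v)" by simp
      have h3: "K * (4 * sqrt v - 4 * sqrt (v - 1)) = 2 * (2 * K * sqrt v - 2 * K * sqrt (v - 1))" by (simp add: algebra_simps)
      have "2 * K / sqrt v \<le> K * (4 * sqrt v - 4 * sqrt (v - 1))" unfolding h2 h3 using h1 by (intro mult_left_mono) auto
      then show ?thesis using v1 by (simp add: hh_def cfun_def algebra_simps)
    qed
    note hc = this
    have e1: "(\<Sum>t=1..Suc N. a t * cfun K (\<Sum>\<tau>\<in>{1..<t}. a \<tau>)) = (\<Sum>t=1..N. a t * cfun K (\<Sum>\<tau>\<in>{1..<t}. a \<tau>)) + cfun K v"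
      using sumS a1 by simp
    have e2: "(\<Sum>\<tau>\<in>{1..<Suc N+1}. a \<tau>) = v + 1" using vs a1 by simp
    have "v + 1 = real (Suc j)" using j by simp
    then show ?thesis unfolding e1 e2 using IH(1) hc by (metis add_right_mono order_trans)
  qed
qed

lemma hh_le: "0 \<le> v \<Longrightarrow> hh v \<le> 1 + 4 * sqrt v"
  by (simp add: hh_def)

lemma vec_meas:
  fixes f :: "'n::finite \<Rightarrow> 'a \<Rightarrow> real"
  assumes "\<And>k. f k \<in> borel_measurable M"
  shows "(\<lambda>\<omega>. (\<chi> k. f k \<omega>) :: real^'n) \<in> borel_measurable M"
proof (subst borel_measurable_euclidean_space, intro ballI)
  fix i :: "real^'n" assume "i \<in> Basis"
  then obtain j where "i = axis j 1" by (auto simp: Basis_vec_def)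
  then show "(\<lambda>x. (\<chi> k. f k x) \<bullet> i) \<in> borel_measurable M"
    using assms by (simp add: inner_axis)
qed

lemma measurable_sigma_gen:
  assumes "G \<subseteq> Pow \<Omega>" "\<And>B. B \<in> sets borel \<Longrightarrow> f -` B \<inter> \<Omega> \<in> G"
  shows "f \<in> measurable (sigma \<Omega> G) (borel :: 'b::topological_space measure)"
proof (rule measurableI)
  show "\<And>x. x \<in> space (sigma \<Omega> G) \<Longrightarrow> f x \<in> space borel" by simp
  fix B :: "'b set" assume "B \<in> sets borel"
  then have "f -` B \<inter> \<Omega> \<in> sigma_sets \<Omega> G" using assms(2) by auto
  then show "f -` B \<inter> space (sigma \<Omega> G) \<in> sets (sigma \<Omega> G)" using assms(1) by simp
qed

lemma Min_measurable:
  fixes f :: "'b \<Rightarrow> 'a \<Rightarrow> real"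
  assumes "finite J" "J \<noteq> {}" "\<And>y. y \<in> J \<Longrightarrow> f y \<in> borel_measurable M"
  shows "(\<lambda>\<omega>. Min ((\<lambda>y. f y \<omega>) ` J)) \<in> borel_measurable M"
  using assms
proof (induction J rule: finite_ne_induct)
  case (singleton y)
  then show ?case by simp
next
  case (insert y F)
  have "(\<lambda>\<omega>. Min ((\<lambda>y. f y \<omega>) ` insert y F)) = (\<lambda>\<omega>. min (f y \<omega>) (Min ((\<lambda>y. f y \<omega>) ` F)))"
    using insert by (auto simp: Min_insert)
  then show ?case using insert by simp
qed

locale ucb = prob_space M
  for M :: "'a measure" +
  fixes m r T :: nat and C :: real and E :: "real^'n::finite"
    and W \<alpha> x :: "nat \<Rightarrow> 'a \<Rightarrow> real^'n" and L \<beta> D :: real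
  assumes n2: "CARD('n) \<ge> 2" and r_pos: "0 < r" and r_lt: "r < CARD('n)"
    and C_pos: "C > 0" and T_pos: "T > 0"
    and L_eq: "L = ln (2 * real CARD('n) * real r * C * real T ^ 3 * (real T + 1))"
    and Cb: "C \<le> sqrt (2 * L)"
    and D_eq: "D = C + 2 * sqrt (2 * L)"
    and \<beta>_eq: "\<beta> = 1 / (D * sqrt (real T))"
    and E_range: "\<forall>k. 0 \<le> E $ k \<and> E $ k \<le> C"
    and W_meas: "\<forall>t\<in>{1..T}. W t \<in> borel_measurable M"
    and W_subg: "\<forall>t\<in>{1..T}. \<forall>k. \<forall>l::real. integrable M (\<lambda>\<omega>. exp (l * (W t \<omega> $ k - E $ k)))
                    \<and> (\<integral>\<omega>. exp (l * (W t \<omega> $ k - E $ k)) \<partial>M) \<le> exp (l ^ 2 / 2)"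
    and x_argmin: "\<forall>t\<in>{1..T}. \<forall>\<omega>\<in>space M. x t \<omega> \<in> Jset (m - 1) r \<and>
        (\<forall>y\<in>Jset (m - 1) r. fval (Etil L \<alpha> W t \<omega>) (ucb_p r L \<beta> x \<alpha> W t \<omega>) (x t \<omega>)
                          \<le> fval (Etil L \<alpha> W t \<omega>) (ucb_p r L \<beta> x \<alpha> W t \<omega>) y)"
    and x_hist: "\<forall>t\<in>{1..T}. x t \<in> Hsig M \<alpha> W t \<rightarrow>\<^sub>M borel"
    and \<alpha>_meas: "\<forall>t\<in>{1..T}. \<alpha> t \<in> borel_measurable M"
    and \<alpha>_J1: "\<forall>t\<in>{1..T}. \<forall>\<omega>\<in>space M. \<alpha> t \<omega> \<in> Jset 1 r"
    and \<alpha>_cond: "\<forall>t\<in>{1..T}. \<forall>k. \<forall>A\<in>sets (Hsig M \<alpha> W t).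
        measure M ({\<omega>\<in>space M. \<alpha> t \<omega> $ k = 1} \<inter> A)
          = (\<integral>\<omega>. ucb_p r L \<beta> x \<alpha> W t \<omega> $ k * indicator A \<omega> \<partial>M)"
    and W_indep_hist: "\<forall>t\<in>{1..T}. indep_set
        (sigma_sets (space M) {W t -` B \<inter> space M | B. B \<in> sets borel}) (HAsig M \<alpha> W t)"
begin

abbreviation "p t \<omega> \<equiv> ucb_p r L \<beta> x \<alpha> W t \<omega>"
abbreviation "nn \<equiv> real CARD('n)"

definition HA :: "nat \<Rightarrow> 'a measure" where
  "HA t = sigma (space M) (Hgen M \<alpha> W t \<union> {\<alpha> t -` B \<inter> space M | B. B \<in> sets borel})"

lemma \<alpha>01: "t \<in> {1..T} \<Longrightarrow> \<omega> \<in> space M \<Longrightarrow> \<alpha> t \<omega> $ k = 0 \<or> \<alpha> t \<omega> $ k = 1"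
  using \<alpha>_J1 Jset1_01 by blast

lemma L_pos: "0 < L"
proof -
  have "0 < sqrt (2 * L)" using Cb C_pos by linarith
  then show ?thesis by simp
qed

lemma \<alpha>_m[measurable]: "t \<in> {1..T} \<Longrightarrow> \<alpha> t \<in> borel_measurable M"
  using \<alpha>_meas by blast

lemma W_m[measurable]: "t \<in> {1..T} \<Longrightarrow> W t \<in> borel_measurable M"
  using W_meas by blast

lemma obs_m: "t \<in> {1..T} \<Longrightarrow> obs \<alpha> W t \<in> borel_measurable M"
proof -
  assume t: "t \<in> {1..T}"
  have "\<And>k. (\<lambda>\<omega>. if \<alpha> t \<omega> $ k = 1 then W t \<omega> $ k else 0) \<in> borel_measurable M"
  proof -
    fix k
    have [measurable]: "\<alpha> t \<in> borel_measurable M" "W t \<in> borel_measurable M" using t by auto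
    have "{\<omega> \<in> space M. \<alpha> t \<omega> $ k = 1} \<in> sets M" by measurable
    moreover have "(\<lambda>\<omega>. W t \<omega> $ k) \<in> borel_measurable M"
      by (rule measurable_compose[OF _ borel_measurable_nth]) simp
    ultimately show "(\<lambda>\<omega>. if \<alpha> t \<omega> $ k = 1 then W t \<omega> $ k else 0) \<in> borel_measurable M"
      by (intro measurable_If) auto
  qed
  then show ?thesis unfolding obs_def by (rule vec_meas)
qed

lemma Hgen_Pow: "Hgen M \<alpha> W t \<subseteq> Pow (space M)"
  unfolding Hgen_def by auto

lemma Hgen_sets: "t \<le> T + 1 \<Longrightarrow> Hgen M \<alpha> W t \<subseteq> sets M"
proof
  fix A assume t: "t \<le> T + 1" and A: "A \<in> Hgen M \<alpha> W t"
  then obtain \<tau> B where tau: "\<tau> \<in> {1..<t}" and B: "B \<in> sets borel"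
    and "A = \<alpha> \<tau> -` B \<inter> space M \<or> A = obs \<alpha> W \<tau> -` B \<inter> space M"
    unfolding Hgen_def by blast
  moreover have "\<tau> \<in> {1..T}" using tau t by auto
  ultimately show "A \<in> sets M" using obs_m \<alpha>_m measurable_sets by metis
qed

lemma Hsig_sets: "t \<le> T + 1 \<Longrightarrow> sets (Hsig M \<alpha> W t) = sigma_sets (space M) (Hgen M \<alpha> W t)"
  unfolding Hsig_def using Hgen_Pow by simp

lemma Hsig_space: "space (Hsig M \<alpha> W t) = space M"
  unfolding Hsig_def using Hgen_Pow by simp

lemma subalg: "t \<le> T + 1 \<Longrightarrow> subalgebra M (Hsig M \<alpha> W t)"
  unfolding subalgebra_def using Hsig_sets Hsig_space Hgen_sets sets.sigma_sets_subset by metis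

lemma \<alpha>_Hsig: "\<tau> \<in> {1..<t} \<Longrightarrow> \<alpha> \<tau> \<in> measurable (Hsig M \<alpha> W t) borel"
  unfolding Hsig_def by (rule measurable_sigma_gen[OF Hgen_Pow]) (unfold Hgen_def, blast)

lemma obs_Hsig: "\<tau> \<in> {1..<t} \<Longrightarrow> obs \<alpha> W \<tau> \<in> measurable (Hsig M \<alpha> W t) borel"
  unfolding Hsig_def by (rule measurable_sigma_gen[OF Hgen_Pow]) (unfold Hgen_def, blast)

lemma HA_Pow: "Hgen M \<alpha> W t \<union> {\<alpha> t -` B \<inter> space M | B. B \<in> sets borel} \<subseteq> Pow (space M)"
  using Hgen_Pow by auto

lemma HA_sets: "sets (HA t) = HAsig M \<alpha> W t"
  unfolding HA_def HAsig_def using HA_Pow by simp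

lemma HA_space: "space (HA t) = space M"
  unfolding HA_def using HA_Pow by simp

lemma \<alpha>_HA: "\<tau> \<in> {1..<t} \<Longrightarrow> \<alpha> \<tau> \<in> measurable (HA t) borel"
  unfolding HA_def by (rule measurable_sigma_gen[OF HA_Pow]) (unfold Hgen_def, blast)

lemma \<alpha>_HA_self: "\<alpha> t \<in> measurable (HA t) borel"
  unfolding HA_def by (rule measurable_sigma_gen[OF HA_Pow]) auto

lemma obs_HA: "\<tau> \<in> {1..<t} \<Longrightarrow> obs \<alpha> W \<tau> \<in> measurable (HA t) borel"
  unfolding HA_def by (rule measurable_sigma_gen[OF HA_Pow]) (unfold Hgen_def, blast)

lemma x_m[measurable]: "t \<in> {1..T} \<Longrightarrow> x t \<in> borel_measurable M"
proof -
  assume t: "t \<in> {1..T}"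
  then have "x t \<in> Hsig M \<alpha> W t \<rightarrow>\<^sub>M borel" using x_hist by blast
  moreover have "subalgebra M (Hsig M \<alpha> W t)" using t by (intro subalg) auto
  ultimately show ?thesis by (rule measurable_from_subalg[rotated])
qed

end

lemma vec_nth_measurable[measurable (raw)]:
  "f \<in> borel_measurable N \<Longrightarrow> (\<lambda>\<omega>. (f \<omega> :: real^'n::finite) $ k) \<in> borel_measurable N"
  by (rule measurable_compose[OF _ borel_measurable_nth])

context ucb begin

lemma ncount_m:
  assumes "t \<le> T + 1"
  shows "(\<lambda>\<omega>. ncount \<alpha> t \<omega> k) \<in> borel_measurable M"
proof -
  have [measurable]: "\<And>\<tau>. \<tau> \<in> {1..<t} \<Longrightarrow> \<alpha> \<tau> \<in> borel_measurable M" using assms by auto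
  show ?thesis unfolding ncount_def by measurable
qed

lemma ncount_Hsig:
  shows "(\<lambda>\<omega>. ncount \<alpha> t \<omega> k) \<in> borel_measurable (Hsig M \<alpha> W t)"
proof -
  have [measurable]: "\<And>\<tau>. \<tau> \<in> {1..<t} \<Longrightarrow> \<alpha> \<tau> \<in> borel_measurable (Hsig M \<alpha> W t)"
    using \<alpha>_Hsig by auto
  show ?thesis unfolding ncount_def by measurable
qed

lemma Etil_m:
  assumes "t \<le> T + 1"
  shows "Etil L \<alpha> W t \<in> borel_measurable M"
proof -
  have [measurable]: "\<And>\<tau>. \<tau> \<in> {1..<t} \<Longrightarrow> \<alpha> \<tau> \<in> borel_measurable M"
    "\<And>\<tau>. \<tau> \<in> {1..<t} \<Longrightarrow> W \<tau> \<in> borel_measurable M" using assms by auto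
  have "\<And>k. (\<lambda>\<omega>. Ebar \<alpha> W t \<omega> $ k + sqrt (2 * L / max 1 (ncount \<alpha> t \<omega> k))) \<in> borel_measurable M"
    unfolding Ebar_def ncount_def by simp measurable
  then show ?thesis unfolding Etil_def[abs_def] by (rule vec_meas)
qed

lemma ne_Iset: "Iset r \<noteq> ({} :: (real^'n) set)"
  by (rule Iset_nonempty) (use r_lt in simp)

lemma ucb_q_Iset: "ucb_q r L \<beta> x \<alpha> W s \<omega> \<in> Iset r"
proof (cases s)
  case 0
  have "((\<chi> k. real r / real CARD('n)) :: real^'n) \<in> Iset r" by (rule uniform_Iset) (use r_lt in simp)
  then show ?thesis using 0 by simp
next
  case (Suc s')
  then show ?thesis using projI_in[OF ne_Iset] by simp
qed

lemma p_Iset: "p t \<omega> \<in> Iset r"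
  unfolding ucb_p_def by (rule ucb_q_Iset)

lemma projI_m: "projI r \<in> borel_measurable (borel :: (real^'n) measure)"
  unfolding projI_def[abs_def]
  by (intro borel_measurable_continuous_onI continuous_on_closest_point Iset_convex Iset_closed ne_Iset)

lemma ucb_q_m: "s < T \<Longrightarrow> (\<lambda>\<omega>. ucb_q r L \<beta> x \<alpha> W s \<omega>) \<in> borel_measurable M"
proof (induction s)
  case 0
  then show ?case by simp
next
  case (Suc s)
  have [measurable]: "x (Suc s) \<in> borel_measurable M" "Etil L \<alpha> W (Suc s) \<in> borel_measurable M"
    using Suc.prems by (auto intro: Etil_m)
  have IH[measurable]: "(\<lambda>\<omega>. ucb_q r L \<beta> x \<alpha> W s \<omega>) \<in> borel_measurable M" using Suc by auto
  have g: "(\<lambda>\<omega>. (\<chi> k. Etil L \<alpha> W (Suc s) \<omega> $ k / (1 + x (Suc s) \<omega> $ k)) :: real^'n) \<in> borel_measurable M"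
    by (intro vec_meas) measurable
  have "(\<lambda>\<omega>. ucb_q r L \<beta> x \<alpha> W s \<omega> + \<beta> *\<^sub>R (\<chi> k. Etil L \<alpha> W (Suc s) \<omega> $ k / (1 + x (Suc s) \<omega> $ k))) \<in> borel_measurable M"
    using g by measurable
  then show ?case by (simp add: measurable_compose[OF _ projI_m])
qed

lemma p_m: "t \<in> {1..T} \<Longrightarrow> p t \<in> borel_measurable M"
  unfolding ucb_p_def using ucb_q_m[of "t - 1"] by auto

lemma J_ne: "Jset (m - 1) r \<noteq> ({} :: (real^'n) set)"
proof -
  obtain \<omega> where "\<omega> \<in> space M" using not_empty by blast
  then show ?thesis using x_argmin T_pos by fastforce
qed

lemma fworst_p_m: "t \<in> {1..T} \<Longrightarrow> (\<lambda>\<omega>. fworst m r E (p t \<omega>)) \<in> borel_measurable M"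
proof -
  assume t: "t \<in> {1..T}"
  have [measurable]: "p t \<in> borel_measurable M" using p_m[OF t] .
  show ?thesis unfolding fworst_def
    by (rule Min_measurable[OF Jset_finite J_ne]) (unfold fval_def, measurable)
qed

lemma fworst_bounds:
  assumes "q \<in> Iset r"
  shows "0 \<le> fworst m r E q" "fworst m r E q \<le> C * real r"
proof -
  obtain y where y: "y \<in> Jset (m - 1) r" "fworst m r E q = fval E q y"
    using fworst_attained[OF J_ne] by blast
  have "0 \<le> fval E q y" using E_range assms y(1) by (intro fval_nonneg) (auto simp: Iset_def Jset_nonneg)
  then show "0 \<le> fworst m r E q" using y by simp
  have "fval E q y \<le> C * real r" using E_range assms y(1) by (intro fval_le) (auto simp: Jset_nonneg)
  then show "fworst m r E q \<le> C * real r" using y by simp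
qed

end

context ucb begin

lemma ncount_nat:
  assumes t: "1 \<le> t" "t \<le> T + 1" and \<omega>: "\<omega> \<in> space M"
  shows "\<exists>j<t. ncount \<alpha> t \<omega> k = real j"
proof -
  have a01: "\<alpha> \<tau> \<omega> $ k = 0 \<or> \<alpha> \<tau> \<omega> $ k = 1" if "\<tau> \<in> {1..t-1}" for \<tau>
  proof -
    have "\<tau> \<in> {1..T}" using that t by auto
    then show ?thesis using \<alpha>01 \<omega> by blast
  qed
  have tt: "{1..<t - 1 + 1} = {1..<t}" using t by auto
  obtain j :: nat where j: "ncount \<alpha> t \<omega> k = real j"
    using count_sum[of "t - 1" "\<lambda>\<tau>. \<alpha> \<tau> \<omega> $ k" 0, OF a01] unfolding tt ncount_def by auto
  have "ncount \<alpha> t \<omega> k \<le> (\<Sum>\<tau>\<in>{1..<t}. 1)"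
    unfolding ncount_def using a01 by (intro sum_mono) fastforce
  then have "real j \<le> real (t - 1)" using j by simp
  then have "j < t" using t by linarith
  then show ?thesis using j by blast
qed

lemma ncount_nonneg: "t \<le> T + 1 \<Longrightarrow> \<omega> \<in> space M \<Longrightarrow> 0 \<le> ncount \<alpha> t \<omega> k"
  unfolding ncount_def
proof (intro sum_nonneg)
  fix \<tau> assume "t \<le> T + 1" "\<omega> \<in> space M" "\<tau> \<in> {1..<t}"
  then have "\<tau> \<in> {1..T}" "\<omega> \<in> space M" by auto
  then have "\<alpha> \<tau> \<omega> $ k = 0 \<or> \<alpha> \<tau> \<omega> $ k = 1" by (rule \<alpha>01)
  then show "0 \<le> \<alpha> \<tau> \<omega> $ k" by auto
qed

lemma bounded_integrable:
  assumes "f \<in> borel_measurable M" "\<And>\<omega>. \<omega> \<in> space M \<Longrightarrow> \<bar>f \<omega>\<bar> \<le> B"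
  shows "integrable M (f :: 'a \<Rightarrow> real)"
  using assms by (intro integrable_const_bound[where B=B]) auto

lemma cond_swap:
  assumes t: "t \<in> {1..T}"
  shows "(\<integral>\<omega>. g (ncount \<alpha> t \<omega> k) * p t \<omega> $ k \<partial>M) = (\<integral>\<omega>. g (ncount \<alpha> t \<omega> k) * \<alpha> t \<omega> $ k \<partial>M)"
proof -
  define A where "A j = {\<omega> \<in> space M. ncount \<alpha> t \<omega> k = real j}" for j :: nat
  have [measurable]: "p t \<in> borel_measurable M" "\<alpha> t \<in> borel_measurable M" using t p_m by auto
  have nc_m[measurable]: "(\<lambda>\<omega>. ncount \<alpha> t \<omega> k) \<in> borel_measurable M" using t by (intro ncount_m) auto
  have AH: "A j \<in> sets (Hsig M \<alpha> W t)" for j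
  proof -
    have [measurable]: "(\<lambda>\<omega>. ncount \<alpha> t \<omega> k) \<in> borel_measurable (Hsig M \<alpha> W t)" by (rule ncount_Hsig)
    have "{\<omega> \<in> space (Hsig M \<alpha> W t). ncount \<alpha> t \<omega> k = real j} \<in> sets (Hsig M \<alpha> W t)" by measurable
    then show ?thesis unfolding A_def Hsig_space .
  qed
  have AM[measurable]: "A j \<in> sets M" for j unfolding A_def by measurable
  have decomp: "g (ncount \<alpha> t \<omega> k) * h \<omega> = (\<Sum>j<t. g (real j) * (h \<omega> * indicator (A j) \<omega>))"
    if \<omega>: "\<omega> \<in> space M" for \<omega> :: 'a and h :: "'a \<Rightarrow> real"
  proof -
    have tt: "1 \<le> t" "t \<le> T + 1" using t by auto
    obtain j0 where j0: "j0 < t" "ncount \<alpha> t \<omega> k = real j0" using ncount_nat[OF tt \<omega>] by blast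
    have "(\<Sum>j<t. g (real j) * (h \<omega> * indicator (A j) \<omega>)) = (\<Sum>j\<in>{j0}. g (real j) * (h \<omega> * indicator (A j) \<omega>))"
      using j0 \<omega> by (intro sum.mono_neutral_right) (auto simp: A_def)
    also have "\<dots> = g (ncount \<alpha> t \<omega> k) * h \<omega>" using j0 \<omega> by (simp add: A_def)
    finally show ?thesis by simp
  qed
  have pI: "integrable M (\<lambda>\<omega>. p t \<omega> $ k * indicator (A j) \<omega>)" for j
    by (rule bounded_integrable[where B=1]) (use p_Iset in \<open>auto simp: Iset_def indicator_def\<close>)
  have aI: "integrable M (\<lambda>\<omega>. \<alpha> t \<omega> $ k * indicator (A j) \<omega>)" for j
  proof (rule bounded_integrable[where B=1])
    fix \<omega> assume "\<omega> \<in> space M"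
    then have "\<alpha> t \<omega> $ k = 0 \<or> \<alpha> t \<omega> $ k = 1" using \<alpha>01 t by blast
    then show "\<bar>\<alpha> t \<omega> $ k * indicator (A j) \<omega>\<bar> \<le> 1" by (auto simp: indicator_def)
  qed measurable
  have "(\<integral>\<omega>. g (ncount \<alpha> t \<omega> k) * p t \<omega> $ k \<partial>M) = (\<integral>\<omega>. (\<Sum>j<t. g (real j) * (p t \<omega> $ k * indicator (A j) \<omega>)) \<partial>M)"
    using decomp[of _ "\<lambda>\<omega>. p t \<omega> $ k"] by (intro Bochner_Integration.integral_cong) auto
  also have "\<dots> = (\<Sum>j<t. g (real j) * (\<integral>\<omega>. p t \<omega> $ k * indicator (A j) \<omega> \<partial>M))"
    using pI by (simp add: integral_sum)
  also have "\<dots> = (\<Sum>j<t. g (real j) * (\<integral>\<omega>. \<alpha> t \<omega> $ k * indicator (A j) \<omega> \<partial>M))"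
  proof (intro sum.cong refl arg_cong2[where f="(*)"])
    fix j
    have "(\<integral>\<omega>. p t \<omega> $ k * indicator (A j) \<omega> \<partial>M) = measure M ({\<omega>\<in>space M. \<alpha> t \<omega> $ k = 1} \<inter> A j)"
      using \<alpha>_cond t AH by auto
    also have "\<dots> = (\<integral>\<omega>. indicator ({\<omega>\<in>space M. \<alpha> t \<omega> $ k = 1} \<inter> A j) \<omega> \<partial>M)"
      by (simp add: Int_absorb2 A_def Int_assoc) 
    also have "\<dots> = (\<integral>\<omega>. \<alpha> t \<omega> $ k * indicator (A j) \<omega> \<partial>M)"
    proof (intro Bochner_Integration.integral_cong refl)
      fix \<omega> assume "\<omega> \<in> space M"
      then show "indicator ({\<omega>\<in>space M. \<alpha> t \<omega> $ k = 1} \<inter> A j) \<omega> = \<alpha> t \<omega> $ k * indicator (A j) \<omega>"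
        using \<alpha>01[OF t, of \<omega> k] by (auto simp: indicator_def)
    qed
    finally show "(\<integral>\<omega>. p t \<omega> $ k * indicator (A j) \<omega> \<partial>M) = (\<integral>\<omega>. \<alpha> t \<omega> $ k * indicator (A j) \<omega> \<partial>M)" .
  qed
  also have "\<dots> = (\<integral>\<omega>. (\<Sum>j<t. g (real j) * (\<alpha> t \<omega> $ k * indicator (A j) \<omega>)) \<partial>M)"
    using aI by (simp add: integral_sum)
  also have "\<dots> = (\<integral>\<omega>. g (ncount \<alpha> t \<omega> k) * \<alpha> t \<omega> $ k \<partial>M)"
    using decomp[of _ "\<lambda>\<omega>. \<alpha> t \<omega> $ k"] by (intro Bochner_Integration.integral_cong) auto
  finally show ?thesis .
qed

end

lemma (in prob_space) indep_nn_mult: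
  fixes F G :: "'a \<Rightarrow> real"
  assumes ind: "indep_set A B"
    and A: "A = sigma_sets (space M) GA" and B: "B = sigma_sets (space M) GB"
    and Fm: "F \<in> borel_measurable M" "\<And>S. S \<in> sets borel \<Longrightarrow> F -` S \<inter> space M \<in> B"
    and Gm: "G \<in> borel_measurable M" "\<And>S. S \<in> sets borel \<Longrightarrow> G -` S \<inter> space M \<in> A"
  shows "(\<integral>\<^sup>+\<omega>. ennreal (F \<omega>) * ennreal (G \<omega>) \<partial>M) = (\<integral>\<^sup>+\<omega>. ennreal (F \<omega>) \<partial>M) * (\<integral>\<^sup>+\<omega>. ennreal (G \<omega>) \<partial>M)"
proof -
  have sG: "sigma_sets (space M) {G -` S \<inter> space M | S. S \<in> sets borel} \<subseteq> A"
    unfolding A by (rule sigma_sets_mono) (use Gm(2) A in auto)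
  have sF: "sigma_sets (space M) {F -` S \<inter> space M | S. S \<in> sets borel} \<subseteq> B"
    unfolding B by (rule sigma_sets_mono) (use Fm(2) B in auto)
  have "indep_set (sigma_sets (space M) {G -` S \<inter> space M | S. S \<in> sets borel})
                  (sigma_sets (space M) {F -` S \<inter> space M | S. S \<in> sets borel})"
    unfolding indep_set_def
    by (rule indep_sets_mono_sets[OF ind[unfolded indep_set_def]]) (use sG sF in \<open>auto split: bool.split\<close>)
  then have iv: "indep_var borel G borel F"
    using Fm(1) Gm(1) by (simp add: indep_var_eq)
  have em: "(\<lambda>y::real. ennreal y) \<in> measurable borel borel" by measurable
  have iv': "indep_var borel (ennreal \<circ> G) borel (ennreal \<circ> F)"
    by (rule indep_var_compose[OF iv em em])
  have iv2: "indep_vars (\<lambda>_. borel) (case_bool (ennreal \<circ> G) (ennreal \<circ> F)) UNIV"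
  proof -
    have "(\<lambda>_::bool. borel) = case_bool borel borel"
      by (rule ext) (simp split: bool.split)
    then show ?thesis using iv' unfolding indep_var_def by metis
  qed
  have "(\<integral>\<^sup>+\<omega>. (\<Prod>i\<in>UNIV. case_bool (ennreal \<circ> G) (ennreal \<circ> F) i \<omega>) \<partial>M)
       = (\<Prod>i\<in>UNIV. \<integral>\<^sup>+\<omega>. case_bool (ennreal \<circ> G) (ennreal \<circ> F) i \<omega> \<partial>M)"
    by (rule indep_vars_nn_integral[OF _ iv2]) auto
  then show ?thesis
    by (simp add: UNIV_bool mult.commute comp_def)
qed

context ucb begin

definition Sm :: "'n \<Rightarrow> nat \<Rightarrow> 'a \<Rightarrow> real" where
  "Sm k t \<omega> = (\<Sum>\<tau>\<in>{1..<t}. \<alpha> \<tau> \<omega> $ k * (W \<tau> \<omega> $ k - E $ k))"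

definition Zf :: "real \<Rightarrow> 'n \<Rightarrow> nat \<Rightarrow> 'a \<Rightarrow> real" where
  "Zf lam k t \<omega> = exp (lam * Sm k t \<omega> - lam\<^sup>2 / 2 * ncount \<alpha> t \<omega> k)"

lemma Zf_m: "t \<le> T + 1 \<Longrightarrow> Zf lam k t \<in> borel_measurable M"
proof -
  assume t: "t \<le> T + 1"
  have [measurable]: "\<And>\<tau>. \<tau> \<in> {1..<t} \<Longrightarrow> \<alpha> \<tau> \<in> borel_measurable M"
    "\<And>\<tau>. \<tau> \<in> {1..<t} \<Longrightarrow> W \<tau> \<in> borel_measurable M" using t by auto
  show ?thesis unfolding Zf_def[abs_def] Sm_def ncount_def by measurable
qed

lemma obs_eq: "\<tau> \<in> {1..T} \<Longrightarrow> \<omega> \<in> space M \<Longrightarrow>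
   \<alpha> \<tau> \<omega> $ k * (W \<tau> \<omega> $ k - E $ k) = \<alpha> \<tau> \<omega> $ k * (obs \<alpha> W \<tau> \<omega> $ k - E $ k)"
  using \<alpha>01[of \<tau> \<omega> k] by (auto simp: obs_def)

lemma F_HA:
  assumes t: "t \<in> {1..T}" and S: "S \<in> sets borel"
  shows "(\<lambda>\<omega>. Zf lam k t \<omega> * \<alpha> t \<omega> $ k) -` S \<inter> space M \<in> HAsig M \<alpha> W t"
proof -
  define F' where "F' \<omega> = exp (lam * (\<Sum>\<tau>\<in>{1..<t}. \<alpha> \<tau> \<omega> $ k * (obs \<alpha> W \<tau> \<omega> $ k - E $ k))
      - lam\<^sup>2 / 2 * (\<Sum>\<tau>\<in>{1..<t}. \<alpha> \<tau> \<omega> $ k)) * \<alpha> t \<omega> $ k" for \<omega>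
  have [measurable]: "\<And>\<tau>. \<tau> \<in> {1..<t} \<Longrightarrow> \<alpha> \<tau> \<in> borel_measurable (HA t)"
    "\<And>\<tau>. \<tau> \<in> {1..<t} \<Longrightarrow> obs \<alpha> W \<tau> \<in> borel_measurable (HA t)"
    "\<alpha> t \<in> borel_measurable (HA t)"
    using \<alpha>_HA obs_HA \<alpha>_HA_self by auto
  have Fm: "F' \<in> borel_measurable (HA t)" unfolding F'_def by measurable
  have eq: "Zf lam k t \<omega> * \<alpha> t \<omega> $ k = F' \<omega>" if "\<omega> \<in> space M" for \<omega>
  proof -
    have "Sm k t \<omega> = (\<Sum>\<tau>\<in>{1..<t}. \<alpha> \<tau> \<omega> $ k * (obs \<alpha> W \<tau> \<omega> $ k - E $ k))"
      unfolding Sm_def using obs_eq that t by (intro sum.cong) auto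
    then show ?thesis unfolding Zf_def F'_def ncount_def by simp
  qed
  have "(\<lambda>\<omega>. Zf lam k t \<omega> * \<alpha> t \<omega> $ k) -` S \<inter> space M = F' -` S \<inter> space (HA t)"
    using eq HA_space by auto
  also have "\<dots> \<in> sets (HA t)" using Fm S by (rule measurable_sets)
  finally show ?thesis using HA_sets by simp
qed

lemma G_W:
  assumes S: "S \<in> sets borel"
  shows "(\<lambda>\<omega>. exp (lam * (W t \<omega> $ k - E $ k))) -` S \<inter> space M \<in> sigma_sets (space M) {W t -` B \<inter> space M | B. B \<in> sets borel}"
proof -
  define h where "h v = exp (lam * ((v::real^'n) $ k - E $ k))" for v
  have "h \<in> borel_measurable borel" unfolding h_def by measurable
  then have "h -` S \<in> sets borel" using measurable_sets[OF _ S, of h borel] by simp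
  moreover have "(\<lambda>\<omega>. exp (lam * (W t \<omega> $ k - E $ k))) -` S \<inter> space M = W t -` (h -` S) \<inter> space M"
    by (auto simp: h_def)
  ultimately show ?thesis by blast
qed

lemma supermart:
  assumes "j \<le> T"
  shows "(\<integral>\<^sup>+\<omega>. ennreal (Zf lam k (Suc j) \<omega>) \<partial>M) \<le> 1"
  using assms
proof (induction j)
  case 0
  have "(\<integral>\<^sup>+\<omega>. ennreal (Zf lam k (Suc 0) \<omega>) \<partial>M) = (\<integral>\<^sup>+\<omega>. 1 \<partial>M)"
    by (intro nn_integral_cong) (simp add: Zf_def Sm_def ncount_def)
  then show ?case by (simp add: emeasure_space_1)
next
  case (Suc j)
  define t where "t = Suc j"
  have t: "t \<in> {1..T}" using Suc.prems by (auto simp: t_def)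
  have IH: "(\<integral>\<^sup>+\<omega>. ennreal (Zf lam k t \<omega>) \<partial>M) \<le> 1" using Suc by (auto simp: t_def)
  define e where "e = exp (- lam\<^sup>2 / 2)"
  define F where "F \<omega> = Zf lam k t \<omega> * \<alpha> t \<omega> $ k" for \<omega>
  define G where "G \<omega> = exp (lam * (W t \<omega> $ k - E $ k))" for \<omega>
  define H where "H \<omega> = Zf lam k t \<omega> * (1 - \<alpha> t \<omega> $ k)" for \<omega>
  have [measurable]: "\<alpha> t \<in> borel_measurable M" "W t \<in> borel_measurable M" "Zf lam k t \<in> borel_measurable M"
    using t Zf_m by auto
  have Fm[measurable]: "F \<in> borel_measurable M" unfolding F_def by measurable
  have Gm[measurable]: "G \<in> borel_measurable M" unfolding G_def by measurable
  have Hm[measurable]: "H \<in> borel_measurable M" unfolding H_def by measurable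
  have pw: "ennreal (Zf lam k (Suc t) \<omega>) = ennreal (H \<omega>) + ennreal e * (ennreal (F \<omega>) * ennreal (G \<omega>))"
    if \<omega>: "\<omega> \<in> space M" for \<omega>
  proof -
    have S1: "Sm k (Suc t) \<omega> = Sm k t \<omega> + \<alpha> t \<omega> $ k * (W t \<omega> $ k - E $ k)"
      unfolding Sm_def using t by simp
    have N1: "ncount \<alpha> (Suc t) \<omega> k = ncount \<alpha> t \<omega> k + \<alpha> t \<omega> $ k"
      unfolding ncount_def using t by simp
    have Z0: "0 \<le> Zf lam k t \<omega>" by (simp add: Zf_def)
    consider "\<alpha> t \<omega> $ k = 0" | "\<alpha> t \<omega> $ k = 1" using \<alpha>01 t \<omega> by blast
    then show ?thesis
    proof cases
      case 1
      then show ?thesis by (simp add: Zf_def S1 N1 H_def F_def)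
    next
      case 2
      have "Zf lam k (Suc t) \<omega> = e * (Zf lam k t \<omega> * G \<omega>)"
        unfolding Zf_def S1 N1 2 e_def G_def
        by (simp add: exp_add[symmetric] algebra_simps)
      then show ?thesis using Z0 2
        by (simp add: H_def F_def e_def ennreal_mult' ennreal_mult mult.assoc)
    qed
  qed
  have indep: "(\<integral>\<^sup>+\<omega>. ennreal (F \<omega>) * ennreal (G \<omega>) \<partial>M) = (\<integral>\<^sup>+\<omega>. ennreal (F \<omega>) \<partial>M) * (\<integral>\<^sup>+\<omega>. ennreal (G \<omega>) \<partial>M)"
  proof (rule indep_nn_mult)
    show "indep_set (sigma_sets (space M) {W t -` B \<inter> space M | B. B \<in> sets borel}) (HAsig M \<alpha> W t)"
      using W_indep_hist t by blast
    show "HAsig M \<alpha> W t = sigma_sets (space M) (Hgen M \<alpha> W t \<union> {\<alpha> t -` B \<inter> space M | B. B \<in> sets borel})"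
      by (simp add: HAsig_def)
    show "\<And>S. S \<in> sets borel \<Longrightarrow> F -` S \<inter> space M \<in> HAsig M \<alpha> W t"
      unfolding F_def using F_HA t by blast
    show "\<And>S. S \<in> sets borel \<Longrightarrow> G -` S \<inter> space M \<in> sigma_sets (space M) {W t -` B \<inter> space M | B. B \<in> sets borel}"
      unfolding G_def by (rule G_W)
  qed (auto)
  have Gint: "(\<integral>\<^sup>+\<omega>. ennreal (G \<omega>) \<partial>M) \<le> ennreal (exp (lam\<^sup>2 / 2))"
  proof -
    have "integrable M G" "expectation G \<le> exp (lam\<^sup>2 / 2)" using W_subg t unfolding G_def by auto
    moreover have "(\<integral>\<^sup>+\<omega>. ennreal (G \<omega>) \<partial>M) = ennreal (expectation G)"
      using \<open>integrable M G\<close> unfolding G_def by (intro nn_integral_eq_integral) auto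
    ultimately show ?thesis by (simp add: ennreal_leI)
  qed
  have "(\<integral>\<^sup>+\<omega>. ennreal (Zf lam k (Suc t) \<omega>) \<partial>M)
      = (\<integral>\<^sup>+\<omega>. ennreal (H \<omega>) + ennreal e * (ennreal (F \<omega>) * ennreal (G \<omega>)) \<partial>M)"
    using pw by (intro nn_integral_cong) auto
  also have "\<dots> = (\<integral>\<^sup>+\<omega>. ennreal (H \<omega>) \<partial>M) + ennreal e * (\<integral>\<^sup>+\<omega>. ennreal (F \<omega>) * ennreal (G \<omega>) \<partial>M)"
    by (simp add: nn_integral_add nn_integral_cmult)
  also have "\<dots> \<le> (\<integral>\<^sup>+\<omega>. ennreal (H \<omega>) \<partial>M) + ennreal e * ((\<integral>\<^sup>+\<omega>. ennreal (F \<omega>) \<partial>M) * ennreal (exp (lam\<^sup>2 / 2)))"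
    unfolding indep by (intro add_mono order_refl mult_left_mono Gint) auto
  also have "\<dots> = (\<integral>\<^sup>+\<omega>. ennreal (H \<omega>) \<partial>M) + (\<integral>\<^sup>+\<omega>. ennreal (F \<omega>) \<partial>M)"
  proof -
    have "ennreal e * ennreal (exp (lam\<^sup>2 / 2)) = 1"
      by (simp add: e_def ennreal_mult'[symmetric] exp_add[symmetric])
    then show ?thesis by (metis mult.assoc mult.commute mult.left_neutral)
  qed
  also have "\<dots> = (\<integral>\<^sup>+\<omega>. ennreal (H \<omega>) + ennreal (F \<omega>) \<partial>M)"
    by (simp add: nn_integral_add)
  also have "\<dots> = (\<integral>\<^sup>+\<omega>. ennreal (Zf lam k t \<omega>) \<partial>M)"
  proof (intro nn_integral_cong)
    fix \<omega> assume \<omega>: "\<omega> \<in> space M"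
    have Z0: "0 \<le> Zf lam k t \<omega>" by (simp add: Zf_def)
    consider "\<alpha> t \<omega> $ k = 0" | "\<alpha> t \<omega> $ k = 1" using \<alpha>01 t \<omega> by blast
    then show "ennreal (H \<omega>) + ennreal (F \<omega>) = ennreal (Zf lam k t \<omega>)"
      by cases (simp_all add: H_def F_def)
  qed
  also have "\<dots> \<le> 1" by (rule IH)
  finally show ?case by (simp add: t_def)
qed

end

context ucb begin

lemma Sm_m: "t \<le> T + 1 \<Longrightarrow> Sm k t \<in> borel_measurable M"
proof -
  assume t: "t \<le> T + 1"
  have [measurable]: "\<And>\<tau>. \<tau> \<in> {1..<t} \<Longrightarrow> \<alpha> \<tau> \<in> borel_measurable M"
    "\<And>\<tau>. \<tau> \<in> {1..<t} \<Longrightarrow> W \<tau> \<in> borel_measurable M" using t by auto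
  show ?thesis unfolding Sm_def[abs_def] by measurable
qed

lemma chernoff:
  assumes t: "t \<in> {1..T}" and s: "0 < s" and a: "0 \<le> a" and \<sigma>: "\<sigma>\<^sup>2 = 1"
  shows "measure M {\<omega>\<in>space M. ncount \<alpha> t \<omega> k = s \<and> a \<le> \<sigma> * Sm k t \<omega>} \<le> exp (- (a\<^sup>2) / (2 * s))"
proof -
  define Ev where "Ev = {\<omega>\<in>space M. ncount \<alpha> t \<omega> k = s \<and> a \<le> \<sigma> * Sm k t \<omega>}"
  define lam where "lam = \<sigma> * a / s"
  define c where "c = exp (- (a\<^sup>2) / (2 * s))"
  have [measurable]: "Sm k t \<in> borel_measurable M" "(\<lambda>\<omega>. ncount \<alpha> t \<omega> k) \<in> borel_measurable M"
    "Zf lam k t \<in> borel_measurable M"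
    using t Sm_m ncount_m Zf_m by auto
  have EvM[measurable]: "Ev \<in> sets M" unfolding Ev_def by measurable
  have pw: "indicator Ev \<omega> \<le> ennreal (Zf lam k t \<omega>) * ennreal c" if "\<omega> \<in> space M" for \<omega>
  proof (cases "\<omega> \<in> Ev")
    case True
    then have n: "ncount \<alpha> t \<omega> k = s" and S: "a \<le> \<sigma> * Sm k t \<omega>" by (auto simp: Ev_def)
    have l2: "lam\<^sup>2 = a\<^sup>2 / s\<^sup>2" unfolding lam_def using \<sigma> by (simp add: power_divide power_mult_distrib)
    have "lam * Sm k t \<omega> = (a / s) * (\<sigma> * Sm k t \<omega>)" by (simp add: lam_def)
    also have "\<dots> \<ge> (a / s) * a" using S a s by (intro mult_left_mono) auto
    finally have h1: "a * a / s \<le> lam * Sm k t \<omega>" by simp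
    have "lam\<^sup>2 / 2 * ncount \<alpha> t \<omega> k = a\<^sup>2 / (2 * s)" using s unfolding n l2 by (simp add: power2_eq_square field_simps)
    then have "a\<^sup>2 / (2 * s) \<le> lam * Sm k t \<omega> - lam\<^sup>2 / 2 * ncount \<alpha> t \<omega> k"
      using h1 s by (simp add: power2_eq_square field_simps)
    then have "1 \<le> Zf lam k t \<omega> * c"
      unfolding Zf_def c_def by (simp add: exp_add[symmetric] exp_ge_zero)
    then have "ennreal 1 \<le> ennreal (Zf lam k t \<omega> * c)" by (rule ennreal_leI)
    then show ?thesis using True by (simp add: ennreal_mult'' c_def Zf_def)
  next
    case False
    then show ?thesis by simp
  qed
  have "emeasure M Ev = (\<integral>\<^sup>+\<omega>. indicator Ev \<omega> \<partial>M)" by simp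
  also have "\<dots> \<le> (\<integral>\<^sup>+\<omega>. ennreal (Zf lam k t \<omega>) * ennreal c \<partial>M)"
    using pw by (intro nn_integral_mono) auto
  also have "\<dots> = (\<integral>\<^sup>+\<omega>. ennreal (Zf lam k t \<omega>) \<partial>M) * ennreal c"
    by (simp add: nn_integral_multc)
  also have "\<dots> \<le> 1 * ennreal c"
  proof (intro mult_right_mono)
    have "t = Suc (t - 1)" "t - 1 \<le> T" using t by auto
    then show "(\<integral>\<^sup>+\<omega>. ennreal (Zf lam k t \<omega>) \<partial>M) \<le> 1" using supermart[of "t - 1" lam k] by metis
  qed auto
  finally have "emeasure M Ev \<le> ennreal c" by simp
  then show ?thesis unfolding Ev_def[symmetric] c_def
    by (simp add: emeasure_eq_measure)
qed

end

context ucb begin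

definition Good :: "'a \<Rightarrow> bool" where
  "Good \<omega> \<longleftrightarrow> (\<forall>t\<in>{1..T}. \<forall>k. ncount \<alpha> t \<omega> k \<noteq> 0 \<longrightarrow> \<bar>Sm k t \<omega>\<bar> \<le> sqrt (2 * L * ncount \<alpha> t \<omega> k))"

abbreviation "Kc \<equiv> sqrt (2 * L)"

lemma Kc_pos: "0 < Kc" using L_pos by simp

lemma Etil_bounds:
  assumes t: "t \<in> {1..T}" and \<omega>: "\<omega> \<in> space M" and G: "Good \<omega>"
  shows "E $ k \<le> Etil L \<alpha> W t \<omega> $ k" "Etil L \<alpha> W t \<omega> $ k - E $ k \<le> cfun Kc (ncount \<alpha> t \<omega> k)"
    "Etil L \<alpha> W t \<omega> $ k \<le> D"
proof -
  define n where "n = ncount \<alpha> t \<omega> k"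
  have a01: "\<alpha> \<tau> \<omega> $ k = 0 \<or> \<alpha> \<tau> \<omega> $ k = 1" if "\<tau> \<in> {1..<t}" for \<tau>
    using \<alpha>01[of \<tau> \<omega> k] that t \<omega> by auto
  have sumW: "(\<Sum>\<tau>\<in>{1..<t}. \<alpha> \<tau> \<omega> $ k * W \<tau> \<omega> $ k) = Sm k t \<omega> + n * E $ k"
    unfolding Sm_def n_def ncount_def by (simp add: algebra_simps sum.distrib sum_distrib_left sum_subtractf)
  have Et: "Etil L \<alpha> W t \<omega> $ k = (Sm k t \<omega> + n * E $ k) / max 1 n + sqrt (2 * L / max 1 n)"
    unfolding Etil_def Ebar_def using sumW by (simp add: n_def)
  have Ek: "0 \<le> E $ k" "E $ k \<le> C" using E_range by auto
  have CK: "C \<le> Kc" using Cb .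
  have Dd: "D = C + 2 * Kc" using D_eq .
  have "E $ k \<le> Etil L \<alpha> W t \<omega> $ k \<and> Etil L \<alpha> W t \<omega> $ k - E $ k \<le> cfun Kc n \<and> Etil L \<alpha> W t \<omega> $ k \<le> D"
  proof (cases "n = 0")
    case True
    have "\<forall>\<tau>\<in>{1..<t}. \<alpha> \<tau> \<omega> $ k = 0"
    proof -
      have "\<forall>\<tau>\<in>{1..<t}. 0 \<le> \<alpha> \<tau> \<omega> $ k" using a01 by fastforce
      moreover have "(\<Sum>\<tau>\<in>{1..<t}. \<alpha> \<tau> \<omega> $ k) = 0" using True by (simp add: n_def ncount_def)
      ultimately show ?thesis using sum_nonneg_eq_0_iff[of "{1..<t}" "\<lambda>\<tau>. \<alpha> \<tau> \<omega> $ k"] by simp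
    qed
    then have "Sm k t \<omega> = 0" by (simp add: Sm_def)
    then have "Etil L \<alpha> W t \<omega> $ k = Kc" using Et True by simp
    then show ?thesis using True Ek CK Kc_pos C_pos by (simp add: cfun_def Dd)
  next
    case False
    obtain j where j: "j < t" "n = real j" using ncount_nat[of t \<omega> k] t \<omega> by (auto simp: n_def)
    then have n1: "1 \<le> n" using False by simp
    have mx: "max 1 n = n" using n1 by simp
    have S: "\<bar>Sm k t \<omega>\<bar> \<le> sqrt (2 * L * n)" using G t False by (auto simp: Good_def n_def)
    have sn: "0 < sqrt n" using n1 by simp
    have r1: "sqrt (2 * L / n) = Kc / sqrt n" by (simp add: real_sqrt_divide)
    have r2: "sqrt (2 * L * n) / n = Kc / sqrt n"
      using n1 sn by (simp add: real_sqrt_mult field_simps)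
    have Sb: "\<bar>Sm k t \<omega> / n\<bar> \<le> Kc / sqrt n"
    proof -
      have "\<bar>Sm k t \<omega> / n\<bar> = \<bar>Sm k t \<omega>\<bar> / n" using n1 by simp
      also have "\<dots> \<le> sqrt (2 * L * n) / n" using S n1 by (intro divide_right_mono) auto
      finally show ?thesis using r2 by simp
    qed
    have e: "Etil L \<alpha> W t \<omega> $ k - E $ k = Sm k t \<omega> / n + Kc / sqrt n"
      using n1 unfolding Et mx r1 by (simp add: field_simps)
    have cf: "cfun Kc n = 2 * (Kc / sqrt n)" using False by (simp add: cfun_def)
    have kn: "Kc / sqrt n \<le> Kc"
      using n1 Kc_pos by (simp add: divide_le_eq le_mult_1plus)
    have b1: "Sm k t \<omega> / n \<le> Kc / sqrt n" using abs_le_D1[OF Sb] .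
    have b2: "- (Sm k t \<omega> / n) \<le> Kc / sqrt n" using abs_le_D2[OF Sb] .
    show ?thesis using e b1 b2 cf kn Ek Dd by (intro conjI) linarith+
  qed
  then show "E $ k \<le> Etil L \<alpha> W t \<omega> $ k" "Etil L \<alpha> W t \<omega> $ k - E $ k \<le> cfun Kc (ncount \<alpha> t \<omega> k)"
    "Etil L \<alpha> W t \<omega> $ k \<le> D" by (auto simp: n_def)
qed

end

lemma norm2_vec: "(norm (v :: real^'n))\<^sup>2 = (\<Sum>k\<in>UNIV. (v $ k)\<^sup>2)"
  unfolding power2_norm_eq_inner inner_vec_def by (simp add: power2_eq_square)

lemma P0_dist:
  assumes q: "q \<in> Iset r"
  shows "(norm (((\<chi> k. real r / real CARD('n)) :: real^'n) - q))\<^sup>2 \<le> real CARD('n) / 4"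
proof -
  define n where "n = real CARD('n)"
  define a where "a = real r / n"
  have n0: "0 < n" by (simp add: n_def)
  have q01: "0 \<le> q $ k" "q $ k \<le> 1" for k using q by (auto simp: Iset_def)
  have qs: "(\<Sum>k\<in>UNIV. q $ k) = real r" using q by (auto simp: Iset_def)
  have "(norm (((\<chi> k. real r / real CARD('n)) :: real^'n) - q))\<^sup>2 = (\<Sum>k\<in>UNIV. (a - q $ k)\<^sup>2)"
    unfolding norm2_vec by (simp add: a_def n_def)
  also have "\<dots> = (\<Sum>k\<in>UNIV. a\<^sup>2 - 2 * a * q $ k + (q $ k)\<^sup>2)"
    by (simp add: power2_diff algebra_simps)
  also have "\<dots> = n * a\<^sup>2 - 2 * a * real r + (\<Sum>k\<in>UNIV. (q $ k)\<^sup>2)"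
    by (simp add: sum.distrib sum_subtractf sum_distrib_left[symmetric] qs n_def)
  also have "\<dots> \<le> n * a\<^sup>2 - 2 * a * real r + real r"
  proof -
    have "(\<Sum>k\<in>UNIV. (q $ k)\<^sup>2) \<le> (\<Sum>k\<in>UNIV. q $ k)"
      using q01 by (intro sum_mono) (simp add: power2_eq_square mult_left_le)
    then show ?thesis using qs by simp
  qed
  also have "\<dots> = real r - (real r)\<^sup>2 / n" using n0 by (simp add: a_def power2_eq_square field_simps)
  also have "\<dots> \<le> n / 4"
  proof -
    have "0 \<le> (n - 2 * real r)\<^sup>2" by simp
    then have "4 * real r * n - 4 * (real r)\<^sup>2 \<le> n * n" by (simp add: power2_eq_square algebra_simps)
    then show ?thesis using n0 by (simp add: field_simps power2_eq_square)
  qed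
  finally show ?thesis by (simp add: n_def)
qed

context ucb begin

lemma D_pos: "0 < D" using D_eq C_pos Kc_pos by linarith

lemma good_bound:
  assumes \<omega>: "\<omega> \<in> space M" and G: "Good \<omega>" and q: "q \<in> Iset r"
  shows "(\<Sum>t=1..T. fworst m r E q - fworst m r E (p t \<omega>))
    \<le> 5 / 8 * real CARD('n) * D * sqrt (real T) + (\<Sum>t=1..T. \<Sum>k\<in>UNIV. cfun Kc (ncount \<alpha> t \<omega> k) * p t \<omega> $ k)"
proof -
  define P where "P s = ucb_q r L \<beta> x \<alpha> W s \<omega>" for s
  define Gv where "Gv t = ((\<chi> k. Etil L \<alpha> W t \<omega> $ k / (1 + x t \<omega> $ k)) :: real^'n)" for t
  define cv where "cv t = ((\<chi> k. cfun Kc (ncount \<alpha> t \<omega> k)) :: real^'n)" for t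
  have pP: "p t \<omega> = P (t - 1)" for t by (simp add: ucb_p_def P_def)
  have q0: "0 \<le> q $ k" for k using q by (auto simp: Iset_def)
  have step: "fworst m r E q - fworst m r E (p t \<omega>) \<le> Gv t \<bullet> (q - P (t - 1)) + (\<Sum>k\<in>UNIV. cfun Kc (ncount \<alpha> t \<omega> k) * p t \<omega> $ k)"
    if t: "t \<in> {1..T}" for t
  proof -
    have xt: "x t \<omega> \<in> Jset (m - 1) r" and amin: "\<And>y. y \<in> Jset (m - 1) r \<Longrightarrow>
        fval (Etil L \<alpha> W t \<omega>) (p t \<omega>) (x t \<omega>) \<le> fval (Etil L \<alpha> W t \<omega>) (p t \<omega>) y"
      using x_argmin t \<omega> by auto
    have x0: "0 \<le> x t \<omega> $ k" for k using Jset_nonneg[OF xt] .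
    have p0: "0 \<le> p t \<omega> $ k" for k using p_Iset[of t \<omega>] by (auto simp: Iset_def)
    have h1: "fworst m r E q \<le> fval (Etil L \<alpha> W t \<omega>) q (x t \<omega>)"
      using fworst_le[OF xt] fval_mono_E[of E "Etil L \<alpha> W t \<omega>" q "x t \<omega>"] Etil_bounds(1)[OF t \<omega> G] q0 x0
      by (meson order_trans)
    obtain y where y: "y \<in> Jset (m - 1) r" "fworst m r E (p t \<omega>) = fval E (p t \<omega>) y"
      using fworst_attained[OF J_ne] by blast
    have y0: "0 \<le> y $ k" for k using Jset_nonneg[OF y(1)] .
    have h2: "fval (Etil L \<alpha> W t \<omega>) (p t \<omega>) y - fval E (p t \<omega>) y \<le> (\<Sum>k\<in>UNIV. cv t $ k * p t \<omega> $ k)"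
      using Etil_bounds[OF t \<omega> G] p0 y0 by (intro fval_gap) (auto simp: cv_def)
    have h3: "fval (Etil L \<alpha> W t \<omega>) q (x t \<omega>) - fval (Etil L \<alpha> W t \<omega>) (p t \<omega>) (x t \<omega>) = Gv t \<bullet> (q - P (t - 1))"
      unfolding fval_diff Gv_def pP ..
    have h4: "fval (Etil L \<alpha> W t \<omega>) (p t \<omega>) (x t \<omega>) \<le> fval (Etil L \<alpha> W t \<omega>) (p t \<omega>) y" using amin y(1) .
    show ?thesis using h1 h2 h3 h4 y(2) by (simp add: cv_def)
  qed
  have rec: "P (Suc s) = projI r (P s + \<beta> *\<^sub>R Gv (Suc s))" if "s < T" for s
    by (simp add: P_def Gv_def)
  have oga: "2 * \<beta> * (\<Sum>t=1..T. Gv t \<bullet> (q - P (t - 1)))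
         \<le> (norm (P 0 - q))\<^sup>2 - (norm (P T - q))\<^sup>2 + \<beta>\<^sup>2 * (\<Sum>t=1..T. (norm (Gv t))\<^sup>2)"
    using oga_sum[where N=T and P=P and G=Gv and r=r and \<beta>=\<beta> and q=q] rec q by blast
  have Gn: "(norm (Gv t))\<^sup>2 \<le> real CARD('n) * D\<^sup>2" if t: "t \<in> {1..T}" for t
  proof -
    have xt: "x t \<omega> \<in> Jset (m - 1) r" using x_argmin t \<omega> by auto
    have "(Gv t $ k)\<^sup>2 \<le> D\<^sup>2" for k
    proof -
      have x0: "1 \<le> 1 + x t \<omega> $ k" using Jset_nonneg[OF xt, of k] by simp
      have e0: "0 \<le> Etil L \<alpha> W t \<omega> $ k" using Etil_bounds(1)[OF t \<omega> G, of k] E_range by (meson order_trans)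
      have "Etil L \<alpha> W t \<omega> $ k / (1 + x t \<omega> $ k) \<le> Etil L \<alpha> W t \<omega> $ k"
        using x0 e0 by (simp add: divide_le_eq le_mult_1plus)
      then have "Gv t $ k \<le> D" "0 \<le> Gv t $ k" using Etil_bounds(3)[OF t \<omega> G, of k] e0 x0 by (auto simp: Gv_def)
      then show ?thesis by (simp add: power_mono)
    qed
    then have "(\<Sum>k\<in>UNIV. (Gv t $ k)\<^sup>2) \<le> (\<Sum>k\<in>(UNIV::'n set). D\<^sup>2)" by (intro sum_mono) auto
    then show ?thesis unfolding norm2_vec by simp
  qed
  have sG: "(\<Sum>t=1..T. (norm (Gv t))\<^sup>2) \<le> real T * (real CARD('n) * D\<^sup>2)"
    using sum_mono[of "{1..T}" "\<lambda>t. (norm (Gv t))\<^sup>2" "\<lambda>_. real CARD('n) * D\<^sup>2"] Gn by simp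
  have P0: "(norm (P 0 - q))\<^sup>2 \<le> real CARD('n) / 4" unfolding P_def using P0_dist[OF q] by simp
  have bpos: "0 < \<beta>" using \<beta>_eq D_pos T_pos by simp
  have sT: "0 < sqrt (real T)" using T_pos by simp
  have "2 * \<beta> * (\<Sum>t=1..T. Gv t \<bullet> (q - P (t - 1))) \<le> real CARD('n) / 4 + \<beta>\<^sup>2 * (real T * (real CARD('n) * D\<^sup>2))"
    using oga P0 sG bpos by (smt (verit) mult_left_mono zero_le_power2)
  then have A: "(\<Sum>t=1..T. Gv t \<bullet> (q - P (t - 1))) \<le> (real CARD('n) / 4 + \<beta>\<^sup>2 * (real T * (real CARD('n) * D\<^sup>2))) / (2 * \<beta>)"
    using bpos by (simp add: le_divide_eq mult.commute)
  have E1: "(real CARD('n) / 4 + \<beta>\<^sup>2 * (real T * (real CARD('n) * D\<^sup>2))) / (2 * \<beta>) = real CARD('n) * D * sqrt (real T) / 8 + real CARD('n) * D * (real T / sqrt (real T)) / 2"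
    using D_pos sT unfolding \<beta>_eq by (simp add: field_simps power2_eq_square)
  have E2: "real T / sqrt (real T) = sqrt (real T)" using sT by (metis real_div_sqrt of_nat_0_le_iff)
  have E3: "(real CARD('n) / 4 + \<beta>\<^sup>2 * (real T * (real CARD('n) * D\<^sup>2))) / (2 * \<beta>) = 5 / 8 * real CARD('n) * D * sqrt (real T)"
    unfolding E1 E2 by (simp add: field_simps)
  have B: "(\<Sum>t=1..T. Gv t \<bullet> (q - P (t - 1))) \<le> 5 / 8 * real CARD('n) * D * sqrt (real T)"
    using A E3 by linarith
  have "(\<Sum>t=1..T. fworst m r E q - fworst m r E (p t \<omega>)) \<le>
        (\<Sum>t=1..T. Gv t \<bullet> (q - P (t - 1)) + (\<Sum>k\<in>UNIV. cfun Kc (ncount \<alpha> t \<omega> k) * p t \<omega> $ k))"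
    using step by (intro sum_mono) auto
  also have "\<dots> = (\<Sum>t=1..T. Gv t \<bullet> (q - P (t - 1))) + (\<Sum>t=1..T. \<Sum>k\<in>UNIV. cfun Kc (ncount \<alpha> t \<omega> k) * p t \<omega> $ k)"
    by (simp add: sum.distrib)
  finally show ?thesis using B by simp
qed

end

context ucb begin

definition Ev :: "real \<Rightarrow> 'n \<Rightarrow> nat \<Rightarrow> nat \<Rightarrow> 'a set" where
  "Ev \<sigma> k t s = {\<omega>\<in>space M. ncount \<alpha> t \<omega> k = real s \<and> sqrt (2 * L * real s) \<le> \<sigma> * Sm k t \<omega>}"

definition BS :: "'a \<Rightarrow> real" where
  "BS \<omega> = (\<Sum>k\<in>UNIV. \<Sum>t\<in>{1..T}. \<Sum>s\<in>{1..<t}. indicator (Ev 1 k t s) \<omega> + indicator (Ev (-1) k t s) \<omega>)"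

lemma BS_nonneg: "0 \<le> BS \<omega>"
  unfolding BS_def by (intro sum_nonneg) auto

lemma not_good_BS:
  assumes \<omega>: "\<omega> \<in> space M" and nG: "\<not> Good \<omega>"
  shows "1 \<le> BS \<omega>"
proof -
  obtain t k where t: "t \<in> {1..T}" and n0: "ncount \<alpha> t \<omega> k \<noteq> 0"
    and S: "sqrt (2 * L * ncount \<alpha> t \<omega> k) < \<bar>Sm k t \<omega>\<bar>"
    using nG by (auto simp: Good_def not_le)
  obtain j where j: "j < t" "ncount \<alpha> t \<omega> k = real j" using ncount_nat[of t \<omega> k] t \<omega> by auto
  have js: "j \<in> {1..<t}" using j n0 by auto
  have "\<omega> \<in> Ev 1 k t j \<or> \<omega> \<in> Ev (-1) k t j"
    using S j \<omega> by (cases "0 \<le> Sm k t \<omega>") (auto simp: Ev_def)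
  then have one: "(1::real) \<le> indicator (Ev 1 k t j) \<omega> + indicator (Ev (-1) k t j) \<omega>"
    by (auto simp: indicator_def)
  have "indicator (Ev 1 k t j) \<omega> + indicator (Ev (-1) k t j) \<omega>
        \<le> (\<Sum>s\<in>{1..<t}. indicator (Ev 1 k t s) \<omega> + (indicator (Ev (-1) k t s) \<omega> :: real))"
    using js by (intro member_le_sum) auto
  also have "\<dots> \<le> (\<Sum>t'\<in>{1..T}. \<Sum>s\<in>{1..<t'}. indicator (Ev 1 k t' s) \<omega> + indicator (Ev (-1) k t' s) \<omega>)"
    using t by (intro member_le_sum[where f="\<lambda>t'. \<Sum>s\<in>{1..<t'}. indicator (Ev 1 k t' s) \<omega> + indicator (Ev (-1) k t' s) \<omega>"]) (auto intro: sum_nonneg)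
  also have "\<dots> \<le> BS \<omega>"
    unfolding BS_def
    by (intro member_le_sum[where f="\<lambda>k. \<Sum>t'\<in>{1..T}. \<Sum>s\<in>{1..<t'}. indicator (Ev 1 k t' s) \<omega> + indicator (Ev (-1) k t' s) \<omega>"]) (auto intro!: sum_nonneg)
  finally show ?thesis using one by linarith
qed

lemma fmaximin_le: "fmaximin m r E \<le> C * real r"
  unfolding fmaximin_def using ne_Iset fworst_bounds(2) by (intro cSUP_least) auto

lemma fmaximin_ge: "q \<in> Iset r \<Longrightarrow> fworst m r E q \<le> fmaximin m r E"
  unfolding fmaximin_def using fworst_bounds(2)
  by (intro cSUP_upper) (auto simp: bdd_above_def)

definition K0 :: real where "K0 = 5 / 8 * real CARD('n) * D * sqrt (real T)"

lemma pathwise: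
  assumes \<omega>: "\<omega> \<in> space M"
  shows "real T * fmaximin m r E - (\<Sum>t=1..T. fworst m r E (p t \<omega>))
    \<le> K0 + (\<Sum>t=1..T. \<Sum>k\<in>UNIV. cfun Kc (ncount \<alpha> t \<omega> k) * p t \<omega> $ k) + real T * C * real r * BS \<omega>"
proof -
  have cnn: "0 \<le> (\<Sum>t=1..T. \<Sum>k\<in>UNIV. cfun Kc (ncount \<alpha> t \<omega> k) * p t \<omega> $ k)"
  proof (intro sum_nonneg)
    fix t k assume t: "t \<in> {1..T}"
    have "0 \<le> p t \<omega> $ k" using p_Iset[of t \<omega>] by (auto simp: Iset_def)
    moreover have "0 \<le> cfun Kc (ncount \<alpha> t \<omega> k)"
      using Kc_pos ncount_nonneg[of t \<omega> k] t \<omega> by (simp add: cfun_def)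
    ultimately show "0 \<le> cfun Kc (ncount \<alpha> t \<omega> k) * p t \<omega> $ k" by simp
  qed
  have K00: "0 \<le> K0" unfolding K0_def using D_pos by simp
  have Tp: "0 < real T" using T_pos by simp
  show ?thesis
  proof (cases "Good \<omega>")
    case True
    define B where "B = K0 + (\<Sum>t=1..T. \<Sum>k\<in>UNIV. cfun Kc (ncount \<alpha> t \<omega> k) * p t \<omega> $ k)"
    have "fmaximin m r E \<le> (B + (\<Sum>t=1..T. fworst m r E (p t \<omega>))) / real T"
      unfolding fmaximin_def
    proof (rule cSUP_least[OF ne_Iset])
      fix q :: "real^'n" assume q: "q \<in> Iset r"
      have "(\<Sum>t=1..T. fworst m r E q - fworst m r E (p t \<omega>)) \<le> B"
        using good_bound[OF \<omega> True q] by (simp add: B_def K0_def)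
      then have "real T * fworst m r E q - (\<Sum>t=1..T. fworst m r E (p t \<omega>)) \<le> B"
        by (simp add: sum_subtractf)
      then show "fworst m r E q \<le> (B + (\<Sum>t=1..T. fworst m r E (p t \<omega>))) / real T"
        using Tp by (simp add: le_divide_eq mult.commute)
    qed
    then have "real T * fmaximin m r E - (\<Sum>t=1..T. fworst m r E (p t \<omega>)) \<le> B"
      using Tp by (simp add: le_divide_eq mult.commute)
    moreover have "0 \<le> real T * C * real r * BS \<omega>" using C_pos BS_nonneg by simp
    ultimately show ?thesis unfolding B_def by linarith
  next
    case False
    have "real T * fmaximin m r E \<le> real T * (C * real r)" using fmaximin_le Tp by simp
    moreover have "0 \<le> (\<Sum>t=1..T. fworst m r E (p t \<omega>))"
      using fworst_bounds(1)[OF p_Iset] by (intro sum_nonneg) auto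
    moreover have "real T * C * real r \<le> real T * C * real r * BS \<omega>"
    proof -
      have "0 \<le> real T * C * real r" using C_pos Tp by simp
      then show ?thesis using not_good_BS[OF \<omega> False] mult_left_mono[of 1 "BS \<omega>" "real T * C * real r"] by simp
    qed
    ultimately show ?thesis using cnn K00 by (simp add: algebra_simps)
  qed
qed

end

context ucb begin

lemma cfun_bound: "t \<in> {1..T} \<Longrightarrow> \<omega> \<in> space M \<Longrightarrow> 0 \<le> cfun Kc (ncount \<alpha> t \<omega> k) \<and> cfun Kc (ncount \<alpha> t \<omega> k) \<le> 2 * Kc"
proof -
  assume t: "t \<in> {1..T}" and \<omega>: "\<omega> \<in> space M"
  obtain j where j: "j < t" "ncount \<alpha> t \<omega> k = real j" using ncount_nat[of t \<omega> k] t \<omega> by auto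
  show ?thesis
  proof (cases "j = 0")
    case True
    then show ?thesis using j Kc_pos by (simp add: cfun_def)
  next
    case False
    then have "1 \<le> sqrt (real j)" by simp
    then have "2 * Kc / sqrt (real j) \<le> 2 * Kc" using Kc_pos by (simp add: divide_le_eq le_mult_1plus)
    then show ?thesis using j False Kc_pos by (simp add: cfun_def)
  qed
qed

lemma cfun_m: "t \<le> T + 1 \<Longrightarrow> (\<lambda>\<omega>. cfun Kc (ncount \<alpha> t \<omega> k)) \<in> borel_measurable M"
proof -
  assume "t \<le> T + 1"
  then have [measurable]: "(\<lambda>\<omega>. ncount \<alpha> t \<omega> k) \<in> borel_measurable M" by (rule ncount_m)
  show ?thesis unfolding cfun_def by measurable
qed

lemma CP_int: "t \<in> {1..T} \<Longrightarrow> integrable M (\<lambda>\<omega>. cfun Kc (ncount \<alpha> t \<omega> k) * p t \<omega> $ k)"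
proof (rule bounded_integrable[where B="2 * Kc"])
  assume t: "t \<in> {1..T}"
  have [measurable]: "(\<lambda>\<omega>. cfun Kc (ncount \<alpha> t \<omega> k)) \<in> borel_measurable M" "p t \<in> borel_measurable M"
    using t cfun_m p_m by auto
  show "(\<lambda>\<omega>. cfun Kc (ncount \<alpha> t \<omega> k) * p t \<omega> $ k) \<in> borel_measurable M" by measurable
  fix \<omega> assume \<omega>: "\<omega> \<in> space M"
  have p: "0 \<le> p t \<omega> $ k" "p t \<omega> $ k \<le> 1" using p_Iset[of t \<omega>] by (auto simp: Iset_def)
  have c: "0 \<le> cfun Kc (ncount \<alpha> t \<omega> k)" "cfun Kc (ncount \<alpha> t \<omega> k) \<le> 2 * Kc" using cfun_bound t \<omega> by auto
  have "cfun Kc (ncount \<alpha> t \<omega> k) * p t \<omega> $ k \<le> 2 * Kc * 1" using p c L_pos by (intro mult_mono) auto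
  then show "\<bar>cfun Kc (ncount \<alpha> t \<omega> k) * p t \<omega> $ k\<bar> \<le> 2 * Kc" using p c by simp
qed

lemma CA_int: "t \<in> {1..T} \<Longrightarrow> integrable M (\<lambda>\<omega>. cfun Kc (ncount \<alpha> t \<omega> k) * \<alpha> t \<omega> $ k)"
proof (rule bounded_integrable[where B="2 * Kc"])
  assume t: "t \<in> {1..T}"
  have [measurable]: "(\<lambda>\<omega>. cfun Kc (ncount \<alpha> t \<omega> k)) \<in> borel_measurable M" "\<alpha> t \<in> borel_measurable M"
    using t cfun_m by auto
  show "(\<lambda>\<omega>. cfun Kc (ncount \<alpha> t \<omega> k) * \<alpha> t \<omega> $ k) \<in> borel_measurable M" by measurable
  fix \<omega> assume \<omega>: "\<omega> \<in> space M"
  have a: "\<alpha> t \<omega> $ k = 0 \<or> \<alpha> t \<omega> $ k = 1" using \<alpha>01 t \<omega> by blast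
  have c: "0 \<le> cfun Kc (ncount \<alpha> t \<omega> k)" "cfun Kc (ncount \<alpha> t \<omega> k) \<le> 2 * Kc" using cfun_bound t \<omega> by auto
  show "\<bar>cfun Kc (ncount \<alpha> t \<omega> k) * \<alpha> t \<omega> $ k\<bar> \<le> 2 * Kc" using a c Kc_pos by auto
qed

lemma CA_bound:
  assumes \<omega>: "\<omega> \<in> space M"
  shows "(\<Sum>t=1..T. \<Sum>k\<in>UNIV. cfun Kc (ncount \<alpha> t \<omega> k) * \<alpha> t \<omega> $ k)
     \<le> real CARD('n) * Kc + 4 * Kc * sqrt (real CARD('n) * real r * real T)"
proof -
  define Nk where "Nk k = (\<Sum>\<tau>\<in>{1..<T+1}. \<alpha> \<tau> \<omega> $ k)" for k
  have Nk0: "0 \<le> Nk k" for k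
    unfolding Nk_def
  proof (intro sum_nonneg)
    fix \<tau> assume "\<tau> \<in> {1..<T+1}"
    then have "\<alpha> \<tau> \<omega> $ k = 0 \<or> \<alpha> \<tau> \<omega> $ k = 1" using \<alpha>01 \<omega> by auto
    then show "0 \<le> \<alpha> \<tau> \<omega> $ k" by auto
  qed
  have per_k: "(\<Sum>t=1..T. cfun Kc (ncount \<alpha> t \<omega> k) * \<alpha> t \<omega> $ k) \<le> Kc * (1 + 4 * sqrt (Nk k))" for k
  proof -
    have a01: "\<And>t. t \<in> {1..T} \<Longrightarrow> \<alpha> t \<omega> $ k = 0 \<or> \<alpha> t \<omega> $ k = 1" using \<alpha>01 \<omega> by blast
    have "(\<Sum>t=1..T. \<alpha> t \<omega> $ k * cfun Kc (\<Sum>\<tau>\<in>{1..<t}. \<alpha> \<tau> \<omega> $ k)) \<le> Kc * hh (Nk k)"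
      using count_sum[of T "\<lambda>\<tau>. \<alpha> \<tau> \<omega> $ k" Kc, OF a01] Kc_pos unfolding Nk_def by auto
    also have "\<dots> \<le> Kc * (1 + 4 * sqrt (Nk k))" using hh_le[OF Nk0] Kc_pos by (intro mult_left_mono) auto
    finally show ?thesis by (simp add: ncount_def mult.commute)
  qed
  have sumN: "(\<Sum>k\<in>UNIV. Nk k) = real T * real r"
  proof -
    have "(\<Sum>k\<in>UNIV. Nk k) = (\<Sum>\<tau>\<in>{1..<T+1}. \<Sum>k\<in>UNIV. \<alpha> \<tau> \<omega> $ k)"
      unfolding Nk_def by (rule sum.swap)
    also have "\<dots> = (\<Sum>\<tau>\<in>{1..<T+1}. real r)"
    proof (intro sum.cong refl)
      fix \<tau> assume "\<tau> \<in> {1..<T+1}"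
      then have "\<alpha> \<tau> \<omega> \<in> Jset 1 r" using \<alpha>_J1 \<omega> by auto
      then show "(\<Sum>k\<in>UNIV. \<alpha> \<tau> \<omega> $ k) = real r" by (rule Jset1_sum)
    qed
    finally show ?thesis by simp
  qed
  have CS: "(\<Sum>k\<in>UNIV. sqrt (Nk k)) \<le> sqrt (real CARD('n) * real r * real T)"
  proof (rule real_le_rsqrt)
    have "(\<Sum>k\<in>UNIV. sqrt (Nk k) * 1)\<^sup>2 \<le> (\<Sum>k\<in>UNIV. (sqrt (Nk k))\<^sup>2) * (\<Sum>k\<in>(UNIV::'n set). 1\<^sup>2)"
      by (rule Cauchy_Schwarz_ineq_sum)
    also have "\<dots> = (\<Sum>k\<in>UNIV. Nk k) * real CARD('n)" using Nk0 by simp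
    finally show "(\<Sum>k\<in>UNIV. sqrt (Nk k))\<^sup>2 \<le> real CARD('n) * real r * real T"
      using sumN by (simp add: algebra_simps)
  qed
  have "(\<Sum>t=1..T. \<Sum>k\<in>UNIV. cfun Kc (ncount \<alpha> t \<omega> k) * \<alpha> t \<omega> $ k)
      = (\<Sum>k\<in>UNIV. \<Sum>t=1..T. cfun Kc (ncount \<alpha> t \<omega> k) * \<alpha> t \<omega> $ k)" by (rule sum.swap)
  also have "\<dots> \<le> (\<Sum>k\<in>UNIV. Kc * (1 + 4 * sqrt (Nk k)))" by (intro sum_mono per_k)
  also have "\<dots> = real CARD('n) * Kc + 4 * Kc * (\<Sum>k\<in>UNIV. sqrt (Nk k))"
  proof -
    have "(\<Sum>k\<in>UNIV. Kc * (1 + 4 * sqrt (Nk k))) = (\<Sum>k\<in>(UNIV::'n set). Kc) + (\<Sum>k\<in>UNIV. (4 * Kc) * sqrt (Nk k))"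
      by (simp add: sum.distrib algebra_simps)
    also have "\<dots> = real CARD('n) * Kc + 4 * Kc * (\<Sum>k\<in>UNIV. sqrt (Nk k))"
      by (simp add: sum_distrib_left[symmetric])
    finally show ?thesis .
  qed
  also have "\<dots> \<le> real CARD('n) * Kc + 4 * Kc * sqrt (real CARD('n) * real r * real T)"
    using CS Kc_pos by simp
  finally show ?thesis .
qed

end

lemma final_arith:
  fixes nn Kc C D sT u w :: real
  assumes n2: "2 \<le> nn" and K: "0 < Kc" and C: "0 < C" and D: "D = C + 2 * Kc" and sT: "1 \<le> sT"
    and u: "1 \<le> u" and w: "w = sqrt nn"
  shows "5 / 8 * nn * D * sT + (nn * Kc + 4 * Kc * (w * u)) + 1 \<le> nn * D * sT + 4 * nn * (u * Kc) + 1"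
proof -
  have w0: "0 < w" using w n2 by simp
  have ww: "w * w = nn" using w n2 by simp
  have w1: "16 / 15 \<le> w"
  proof -
    have "sqrt ((16/15)\<^sup>2) \<le> sqrt nn" using n2 by (intro real_sqrt_le_mono) (simp add: power2_eq_square)
    then show ?thesis using w by simp
  qed
  have wn: "w \<le> 15 / 16 * nn"
  proof -
    have "16 * w \<le> 15 * w * w" using w1 w0 by (simp add: mult_right_mono[of "16/15" w w, simplified] algebra_simps)
    then show ?thesis using ww by simp
  qed
  have a1: "3 / 4 * nn * Kc \<le> 3 / 8 * nn * D * sT"
  proof -
    have "2 * Kc \<le> D" using D C by simp
    then have "2 * Kc * 1 \<le> D * sT" using sT K by (intro mult_mono) auto
    then show ?thesis using n2 by (simp add: mult_left_mono[of "2 * Kc" "D * sT" "3/8 * nn", simplified] algebra_simps)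
  qed
  have a2: "4 * Kc * (nn / 16) \<le> 4 * Kc * (u * (nn - w))"
  proof -
    have "nn / 16 \<le> nn - w" using wn by simp
    also have "\<dots> \<le> u * (nn - w)"
    proof -
      have nw: "0 \<le> nn - w" using wn n2 by linarith
      have "0 \<le> (u - 1) * (nn - w)" using u nw by simp
      then show ?thesis by (simp add: algebra_simps)
    qed
    finally have "nn / 16 \<le> u * (nn - w)" .
    then show ?thesis using K by (intro mult_left_mono) auto
  qed
  have "nn * Kc = 3 / 4 * nn * Kc + 4 * Kc * (nn / 16)" by simp
  also have "\<dots> \<le> 3 / 8 * nn * D * sT + 4 * Kc * (u * (nn - w))" using a1 a2 by linarith
  finally have "nn * Kc \<le> 3 / 8 * nn * D * sT + 4 * Kc * (u * (nn - w))" .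
  then show ?thesis by (simp add: algebra_simps)
qed

context ucb begin

lemma fw_int: "t \<in> {1..T} \<Longrightarrow> integrable M (\<lambda>\<omega>. fworst m r E (p t \<omega>))"
  using fworst_p_m fworst_bounds p_Iset C_pos
  by (intro bounded_integrable[where B="C * real r"]) auto

lemma Ev_m: "t \<le> T + 1 \<Longrightarrow> Ev \<sigma> k t s \<in> sets M"
proof -
  assume t: "t \<le> T + 1"
  have [measurable]: "Sm k t \<in> borel_measurable M" "(\<lambda>\<omega>. ncount \<alpha> t \<omega> k) \<in> borel_measurable M"
    using t Sm_m ncount_m by auto
  show ?thesis unfolding Ev_def by measurable
qed

lemma Ev_meas:
  assumes t: "t \<in> {1..T}" and s: "s \<in> {1..<t}" and \<sigma>: "\<sigma>\<^sup>2 = 1"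
  shows "measure M (Ev \<sigma> k t s) \<le> exp (- L)"
proof -
  have s0: "0 < real s" using s by simp
  have a2: "(sqrt (2 * L * real s))\<^sup>2 = 2 * L * real s" using L_pos s0 by simp
  have "measure M (Ev \<sigma> k t s) \<le> exp (- ((sqrt (2 * L * real s))\<^sup>2) / (2 * real s))"
    unfolding Ev_def by (rule chernoff[OF t s0 _ \<sigma>]) (use L_pos s0 in simp)
  also have "\<dots> = exp (- L)" using s0 unfolding a2 by simp
  finally show ?thesis .
qed

lemma BS_int_bound: "integrable M BS \<and> (\<integral>\<omega>. BS \<omega> \<partial>M) \<le> real CARD('n) * (real T * (real T * (2 * exp (- L))))"
proof -
  have ind: "integrable M (\<lambda>\<omega>. indicator (Ev \<sigma> k t s) \<omega> :: real)" if "t \<in> {1..T}" for \<sigma> k t s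
    using Ev_m[of t \<sigma> k s] that by (intro integrable_real_indicator) (auto simp: emeasure_eq_measure)
  have meq: "measure M (Ev \<sigma> k t s \<inter> space M) = measure M (Ev \<sigma> k t s)" for \<sigma> k t s
    by (simp add: Ev_def Int_absorb2) 
  have intS: "integrable M (\<lambda>\<omega>. \<Sum>s\<in>{1..<t}. indicator (Ev 1 k t s) \<omega> + indicator (Ev (-1) k t s) \<omega> :: real)"
    if "t \<in> {1..T}" for k t using ind that by auto
  have intT: "integrable M (\<lambda>\<omega>. \<Sum>t\<in>{1..T}. \<Sum>s\<in>{1..<t}. indicator (Ev 1 k t s) \<omega> + indicator (Ev (-1) k t s) \<omega> :: real)"
    for k using intS by auto
  have I: "integrable M BS" unfolding BS_def using intT by auto
  have "(\<integral>\<omega>. BS \<omega> \<partial>M) = (\<Sum>k\<in>UNIV. \<Sum>t\<in>{1..T}. \<Sum>s\<in>{1..<t}. measure M (Ev 1 k t s) + measure M (Ev (-1) k t s))"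
    unfolding BS_def using ind intS intT by (simp add: integral_sum meq)
  also have "\<dots> \<le> (\<Sum>k\<in>(UNIV::'n set). \<Sum>t\<in>{1..T}. \<Sum>s\<in>{1..<t}. 2 * exp (- L))"
  proof (intro sum_mono)
    fix k t s assume "t \<in> {1..T}" "s \<in> {1..<t}"
    then show "measure M (Ev 1 k t s) + measure M (Ev (-1) k t s) \<le> 2 * exp (- L)"
      using Ev_meas[of t s 1 k] Ev_meas[of t s "-1" k] by simp
  qed
  also have "\<dots> \<le> (\<Sum>k\<in>(UNIV::'n set). \<Sum>t\<in>{1..T}. real T * (2 * exp (- L)))"
  proof (intro sum_mono)
    fix k t assume t: "t \<in> {1..T}"
    have "(\<Sum>s\<in>{1..<t}. 2 * exp (- L)) = real (t - 1) * (2 * exp (- L))" by simp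
    also have "\<dots> \<le> real T * (2 * exp (- L))" using t by (intro mult_right_mono) auto
    finally show "(\<Sum>s\<in>{1..<t}. 2 * exp (- L)) \<le> real T * (2 * exp (- L))" .
  qed
  also have "\<dots> = real CARD('n) * (real T * (real T * (2 * exp (- L))))" by simp
  finally show ?thesis using I by simp
qed

end

context ucb begin

lemma main:
  "(\<Sum>t=1..T. fmaximin m r E - (\<integral>\<omega>. fworst m r E (p t \<omega>) \<partial>M))
   \<le> real CARD('n) * D * sqrt (real T) + 4 * real CARD('n) * sqrt (2 * real r * real T * L) + 1"
proof -
  define fm where "fm = fmaximin m r E"
  define X where "X \<omega> = real T * fm - (\<Sum>t=1..T. fworst m r E (p t \<omega>))" for \<omega>
  define CP where "CP \<omega> = (\<Sum>t=1..T. \<Sum>k\<in>UNIV. cfun Kc (ncount \<alpha> t \<omega> k) * p t \<omega> $ k)" for \<omega>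
  define CA where "CA \<omega> = (\<Sum>t=1..T. \<Sum>k\<in>UNIV. cfun Kc (ncount \<alpha> t \<omega> k) * \<alpha> t \<omega> $ k)" for \<omega>
  define c0 where "c0 = real T * C * real r"
  have BSI: "integrable M BS" and BSb: "(\<integral>\<omega>. BS \<omega> \<partial>M) \<le> real CARD('n) * (real T * (real T * (2 * exp (- L))))"
    using BS_int_bound by auto
  have fI: "integrable M (\<lambda>\<omega>. \<Sum>t=1..T. fworst m r E (p t \<omega>))" using fw_int by auto
  have XI: "integrable M X" unfolding X_def using fI by auto
  have CPI: "integrable M CP" unfolding CP_def using CP_int by auto
  have CAI: "integrable M CA" unfolding CA_def using CA_int by auto
  have RI: "integrable M (\<lambda>\<omega>. K0 + CP \<omega> + c0 * BS \<omega>)" using CPI BSI by auto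
  have "(\<Sum>t=1..T. fm - (\<integral>\<omega>. fworst m r E (p t \<omega>) \<partial>M)) = real T * fm - (\<Sum>t=1..T. (\<integral>\<omega>. fworst m r E (p t \<omega>) \<partial>M))"
    by (simp add: sum_subtractf)
  also have "\<dots> = real T * fm - (\<integral>\<omega>. (\<Sum>t=1..T. fworst m r E (p t \<omega>)) \<partial>M)"
    using fw_int by (simp add: integral_sum)
  also have "\<dots> = (\<integral>\<omega>. X \<omega> \<partial>M)"
    unfolding X_def using fI by (simp add: prob_space)
  also have "\<dots> \<le> (\<integral>\<omega>. K0 + CP \<omega> + c0 * BS \<omega> \<partial>M)"
    by (rule integral_mono[OF XI RI]) (use pathwise in \<open>auto simp: X_def CP_def c0_def fm_def\<close>)
  also have "\<dots> = K0 + (\<integral>\<omega>. CP \<omega> \<partial>M) + c0 * (\<integral>\<omega>. BS \<omega> \<partial>M)"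
    using CPI BSI by (simp add: prob_space)
  also have "(\<integral>\<omega>. CP \<omega> \<partial>M) = (\<integral>\<omega>. CA \<omega> \<partial>M)"
  proof -
    have "(\<integral>\<omega>. CP \<omega> \<partial>M) = (\<Sum>t=1..T. \<Sum>k\<in>UNIV. (\<integral>\<omega>. cfun Kc (ncount \<alpha> t \<omega> k) * p t \<omega> $ k \<partial>M))"
      unfolding CP_def using CP_int by (simp add: integral_sum)
    also have "\<dots> = (\<Sum>t=1..T. \<Sum>k\<in>UNIV. (\<integral>\<omega>. cfun Kc (ncount \<alpha> t \<omega> k) * \<alpha> t \<omega> $ k \<partial>M))"
      using cond_swap by (intro sum.cong refl) auto
    also have "\<dots> = (\<integral>\<omega>. CA \<omega> \<partial>M)"
      unfolding CA_def using CA_int by (simp add: integral_sum)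
    finally show ?thesis .
  qed
  also have "(\<integral>\<omega>. CA \<omega> \<partial>M) \<le> real CARD('n) * Kc + 4 * Kc * sqrt (real CARD('n) * real r * real T)"
  proof -
    have "(\<integral>\<omega>. CA \<omega> \<partial>M) \<le> (\<integral>\<omega>. real CARD('n) * Kc + 4 * Kc * sqrt (real CARD('n) * real r * real T) \<partial>M)"
      by (rule integral_mono[OF CAI]) (use CA_bound in \<open>auto simp: CA_def\<close>)
    then show ?thesis by (simp add: prob_space)
  qed
  also have "c0 * (\<integral>\<omega>. BS \<omega> \<partial>M) \<le> 1"
  proof -
    have c00: "0 \<le> c0" using C_pos by (simp add: c0_def)
    have Q: "0 < 2 * real CARD('n) * real r * C * real T ^ 3 * (real T + 1)" using C_pos r_pos T_pos by simp
    have eL: "exp (- L) = 1 / (2 * real CARD('n) * real r * C * real T ^ 3 * (real T + 1))"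
    proof -
      have "exp L = 2 * real CARD('n) * real r * C * real T ^ 3 * (real T + 1)" using Q L_eq by simp
      then show ?thesis by (simp add: exp_minus inverse_eq_divide)
    qed
    have "c0 * (\<integral>\<omega>. BS \<omega> \<partial>M) \<le> c0 * (real CARD('n) * (real T * (real T * (2 * exp (- L)))))"
      using BSb c00 by (rule mult_left_mono)
    also have "\<dots> = 1 / (real T + 1)"
    proof -
      define A where "A = 2 * real CARD('n) * real r * C * real T ^ 3"
      have Ap: "0 < A" using C_pos r_pos T_pos by (simp add: A_def)
      have cA: "c0 * (real CARD('n) * (real T * (real T * 2))) = A"
        by (simp add: c0_def A_def power3_eq_cube algebra_simps)
      have "c0 * (real CARD('n) * (real T * (real T * (2 * exp (- L))))) = c0 * (real CARD('n) * (real T * (real T * 2))) * exp (- L)"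
        by (simp add: algebra_simps)
      also have "\<dots> = A * (1 / (A * (real T + 1)))" unfolding cA eL A_def by simp
      also have "\<dots> = 1 / (real T + 1)" using Ap by simp
      finally show ?thesis .
    qed
    also have "\<dots> \<le> 1" by simp
    finally show ?thesis .
  qed
  finally have main1: "(\<Sum>t=1..T. fm - (\<integral>\<omega>. fworst m r E (p t \<omega>) \<partial>M))
     \<le> K0 + (real CARD('n) * Kc + 4 * Kc * sqrt (real CARD('n) * real r * real T)) + 1" by simp
  have u1: "1 \<le> sqrt (real r * real T)"
  proof -
    have "1 \<le> r * T" using r_pos T_pos by (simp add: Suc_le_eq)
    then have "1 \<le> real r * real T" by (metis of_nat_1 of_nat_le_iff of_nat_mult)
    then show ?thesis by simp
  qed
  have sT1: "1 \<le> sqrt (real T)" using T_pos by simp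
  have e1: "sqrt (real CARD('n) * real r * real T) = sqrt (real CARD('n)) * sqrt (real r * real T)"
    by (simp add: real_sqrt_mult mult.assoc)
  have e2: "sqrt (2 * real r * real T * L) = sqrt (real r * real T) * Kc"
    by (simp add: real_sqrt_mult[symmetric] algebra_simps)
  have "K0 + (real CARD('n) * Kc + 4 * Kc * sqrt (real CARD('n) * real r * real T)) + 1
      \<le> real CARD('n) * D * sqrt (real T) + 4 * real CARD('n) * sqrt (2 * real r * real T * L) + 1"
    unfolding K0_def e1 e2
    by (rule final_arith[OF _ Kc_pos C_pos D_eq sT1 u1 refl]) (use n2 in simp)
  then show ?thesis using main1 by (simp add: fm_def)
qed

end

theorem theorem2:
  fixes M :: "'a measure"
    and m r T :: nat and C :: real
    and E :: "real^'n"
    and W \<alpha> x :: "nat \<Rightarrow> 'a \<Rightarrow> real^'n"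
    and \<delta> L D \<beta> :: real
  assumes "prob_space M"
    and n2: "CARD('n) \<ge> 2" and m2: "m \<ge> 2" and r_pos: "0 < r" and r_lt: "r < CARD('n)"
    and C_pos: "C > 0" and T_pos: "T > 0"
    and small: "1 / (2 * real CARD('n) * real r * C * real T ^ 2) < 1"
    and Cbound: "sqrt (2 * ln (2 * real CARD('n) * real r * C * real T ^ 3 * (real T + 1))) \<ge> C"
    and E_range: "\<forall>k. 0 \<le> E $ k \<and> E $ k \<le> C"
    \<comment> \<open>rewards W[1..T]: i.i.d. with W_k[t] = E_k + eta_k[t], eta_k[t] zero-mean 1-sub-Gaussian\<close>
    and W_indep: "prob_space.indep_vars M (\<lambda>_. borel) W {1..T}"
    and W_ident: "\<forall>t\<in>{1..T}. distr M borel (W t) = distr M borel (W 1)"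
    and W_mean: "\<forall>t\<in>{1..T}. \<forall>k. integrable M (\<lambda>\<omega>. W t \<omega> $ k - E $ k)
                    \<and> (\<integral>\<omega>. (W t \<omega> $ k - E $ k) \<partial>M) = 0"
    and W_subg: "\<forall>t\<in>{1..T}. \<forall>k. \<forall>l::real. integrable M (\<lambda>\<omega>. exp (l * (W t \<omega> $ k - E $ k)))
                    \<and> (\<integral>\<omega>. exp (l * (W t \<omega> $ k - E $ k)) \<partial>M) \<le> exp (l ^ 2 / 2)"
    \<comment> \<open>algorithm constants\<close>
    defines "\<delta> \<equiv> 1 / (2 * real CARD('n) * real r * C * real T ^ 2)"
    and "L \<equiv> ln (real T * (real T + 1) / \<delta>)"
    and "D \<equiv> C + 2 * sqrt (2 * L)"
    and "\<beta> \<equiv> 1 / (D * sqrt (real T))"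
    \<comment> \<open>x[t]: a minimiser of f_t(p[t], .) over J_{m-1}, determined by the history H[t]\<close>
  assumes x_argmin: "\<forall>t\<in>{1..T}. \<forall>\<omega>\<in>space M. x t \<omega> \<in> Jset (m - 1) r \<and>
        (\<forall>y\<in>Jset (m - 1) r. fval (Etil L \<alpha> W t \<omega>) (ucb_p r L \<beta> x \<alpha> W t \<omega>) (x t \<omega>)
                          \<le> fval (Etil L \<alpha> W t \<omega>) (ucb_p r L \<beta> x \<alpha> W t \<omega>) y)"
    and x_hist: "\<forall>t\<in>{1..T}. x t \<in> Hsig M \<alpha> W t \<rightarrow>\<^sub>M borel"
    \<comment> \<open>actions alpha[t] in J_1 with P(alpha_k[t] = 1 | H[t]) = p_k[t]\<close>
    and \<alpha>_meas: "\<forall>t\<in>{1..T}. \<alpha> t \<in> borel_measurable M"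
    and \<alpha>_J1: "\<forall>t\<in>{1..T}. \<forall>\<omega>\<in>space M. \<alpha> t \<omega> \<in> Jset 1 r"
    and \<alpha>_cond: "\<forall>t\<in>{1..T}. \<forall>k. \<forall>A\<in>sets (Hsig M \<alpha> W t).
        measure M ({\<omega>\<in>space M. \<alpha> t \<omega> $ k = 1} \<inter> A)
          = (\<integral>\<omega>. ucb_p r L \<beta> x \<alpha> W t \<omega> $ k * indicator A \<omega> \<partial>M)"
    \<comment> \<open>W[t] independent of (H[t], alpha[t])\<close>
    and W_indep_hist: "\<forall>t\<in>{1..T}. prob_space.indep_set M
        (sigma_sets (space M) {W t -` B \<inter> space M | B. B \<in> sets borel}) (HAsig M \<alpha> W t)"
  shows "(\<Sum>t=1..T. fmaximin m r E - (\<integral>\<omega>. fworst m r E (ucb_p r L \<beta> x \<alpha> W t \<omega>) \<partial>M))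
         \<le> real CARD('n) * D * sqrt (real T)
           + 4 * real CARD('n) * sqrt (2 * real r * real T * ln (2 * real CARD('n) * real r * C * real T ^ 3 * (real T + 1)))
           + 1"
proof -
  have dd: "\<delta> = 1 / (2 * real CARD('n) * real r * C * (real T)\<^sup>2)" using assms(15) by simp
  have dL: "L = ln (real T * (real T + 1) / \<delta>)" using assms(16) by simp
  have dD: "D = C + 2 * sqrt (2 * L)" using assms(17) by simp
  have db: "\<beta> = 1 / (D * sqrt (real T))" using assms(18) by simp
  have Lq: "L = ln (2 * real CARD('n) * real r * C * real T ^ 3 * (real T + 1))"
  proof -
    have "real T * (real T + 1) / \<delta> = 2 * real CARD('n) * real r * C * real T ^ 3 * (real T + 1)"
      unfolding dd using C_pos by (simp add: power2_eq_square power3_eq_cube field_simps)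
    then show ?thesis using dL by simp
  qed
  interpret ps: prob_space M by (rule assms(1))
  have Wm: "\<forall>t\<in>{1..T}. W t \<in> borel_measurable M"
    using W_indep unfolding ps.indep_vars_def2 by auto
  interpret u: ucb M m r T C E W \<alpha> x L \<beta> D
  proof (intro ucb.intro ucb_axioms.intro)
    show "prob_space M" by (rule assms(1))
  qed (use n2 r_pos r_lt C_pos T_pos Lq Cbound dD db E_range Wm W_subg x_argmin x_hist \<alpha>_meas \<alpha>_J1 \<alpha>_cond W_indep_hist in auto)
  show ?thesis using u.main unfolding Lq by simp
qed

end
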